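(* The set $\mathcal{M}$ of T-invariant means on $C_{ub}(\mathbb{R}_+)$ equals the weak*-closed convex hull of $\mathcal{Q}$.
   Context: $C_{ub}(\mathbb{R}_+)$: real-valued uniformly continuous bounded functions on $\mathbb{R}_+=[0,\infty)$; a T-invariant mean is a positive linear functional $\varphi$ with $\varphi(1)=1$ and $\varphi(T_sf)=\varphi(f)$ for all $s\ge0$, $(T_sf)(x)=f(x+s)$. For an ultrafilter $\mathcal{V}$ on a set $X$ and $g$ from $X$ to a compact Hausdorff space, $\mathcal{V}\text{-}\lim_x g(x)$ is the point $y$ with $g^{-1}(N)\in\mathcal{V}$ for every neighborhood $N$ of $y$. Let $\beta\mathbb{N}_0$ be the Stone–Čech compactification of $\mathbb{N}_0$ (points = ultrafilters on $\mathbb{N}_0$), $\tau$ the continuous extension of $n\mapsto n+1$, $\mathbb{N}_0^*=\beta\mathbb{N}_0\setminus\mathbb{N}_0$. Let $\Omega=(\beta\mathbb{N}_0\times[0,1])/\sim$ with $(\tau\eta,0)\sim(\eta,1)$; it contains $\mathbb{R}_+$ via $(n,t)\mapsto n+t$ and every $f\in C_{ub}(\mathbb{R}_+)$ extends continuously to $\overline{f}$ on $\Omega$: identifying $\omega=(\eta,t)$ with the ultrafilter $\{A+t:A\in\eta\}$ on $\mathbb{R}_+$, $\overline{f}(\omega)=\omega\text{-}\lim_xf(x)$. Let $\Omega^*=\Omega\setminus\mathbb{R}_+$ and for $s\in\mathbb{R}$ let $\tau^s(\eta,t)=(\tau^{[t+s]}\eta,\,t+s-[t+s])$ on $\Omega^*$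 ($[\cdot]$ the integer part), a continuous flow. For $f\in C_{ub}(\mathbb{R}_+)$ and $\omega\in\Omega^*$ put $f_\omega(s)=\overline{f}(\tau^s\omega)$, $s\in\mathbb{R}$. For $\omega\in\Omega^*$ and an ultrafilter $\mathcal{U}$ on $\mathbb{R}_+$ containing no bounded set, $\varphi^{\mathcal{U}}_\omega(f)=\mathcal{U}\text{-}\lim_x\frac1x\int_0^xf_\omega(t)\,dt$; $\mathcal{Q}$ is the set of all such $\varphi^{\mathcal{U}}_\omega$. *)

theory Defs
  imports "HOL-Analysis.Analysis"
begin

text \<open>Elements of C_ub(R+) are represented by functions real => real that are uniformly
continuous and bounded on [0,oo) and normalised by f x = f 0 for x < 0
(this gives a bijection with C_ub(R+)).\<close>
definition Cub :: "(real \<Rightarrow> real) set" where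
  "Cub = {f. uniformly_continuous_on {0..} f \<and> bounded (f ` {0..}) \<and> (\<forall>x<0. f x = f 0)}"

definition shiftT :: "real \<Rightarrow> (real \<Rightarrow> real) \<Rightarrow> (real \<Rightarrow> real)" where
  "shiftT s f = (\<lambda>x. f (max x 0 + s))"

text \<open>Functionals on C_ub(R+) are functions (real => real) => real vanishing outside Cub.\<close>
definition is_T_invariant_mean :: "((real \<Rightarrow> real) \<Rightarrow> real) \<Rightarrow> bool" where
  "is_T_invariant_mean \<phi> \<longleftrightarrow>
     (\<forall>f. f \<notin> Cub \<longrightarrow> \<phi> f = 0) \<and>
     (\<forall>f\<in>Cub. \<forall>g\<in>Cub. \<phi> (\<lambda>x. f x + g x) = \<phi> f + \<phi> g) \<and>
     (\<forall>f\<in>Cub. \<forall>c::real. \<phi> (\<lambda>x. c * f x) = c * \<phi> f) \<and>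
     (\<forall>f\<in>Cub. (\<forall>x\<ge>0. f x \<ge> 0) \<longrightarrow> \<phi> f \<ge> 0) \<and>
     \<phi> (\<lambda>_. 1) = 1 \<and>
     (\<forall>s\<ge>0. \<forall>f\<in>Cub. \<phi> (shiftT s f) = \<phi> f)"

definition ultrafilter :: "'a filter \<Rightarrow> bool" where
  "ultrafilter F \<longleftrightarrow> F \<noteq> bot \<and> (\<forall>P. eventually P F \<or> eventually (\<lambda>x. \<not> P x) F)"

text \<open>Points of N0^* = beta N0 \ N0: free (non-principal) ultrafilters on nat.\<close>
definition free_uf :: "nat filter \<Rightarrow> bool" where
  "free_uf \<eta> \<longleftrightarrow> ultrafilter \<eta> \<and> (\<forall>n. \<not> eventually (\<lambda>m. m = n) \<eta>)"

text \<open>Points of Omega^*: pairs (eta, t) with eta in N0^* and 0 <= t < 1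
(the representative with t < 1 of each class of the identification (tau eta,0) ~ (eta,1)).\<close>
definition Omega_star :: "(nat filter \<times> real) set" where
  "Omega_star = {(\<eta>, t). free_uf \<eta> \<and> 0 \<le> t \<and> t < 1}"

definition tau_pow :: "int \<Rightarrow> nat filter \<Rightarrow> nat filter" where
  "tau_pow k \<eta> = filtermap (\<lambda>n. nat (int n + k)) \<eta>"

definition omega_flow :: "real \<Rightarrow> nat filter \<times> real \<Rightarrow> nat filter \<times> real" where
  "omega_flow s \<omega> = (case \<omega> of (\<eta>, t) \<Rightarrow>
      (tau_pow \<lfloor>t + s\<rfloor> \<eta>, t + s - of_int \<lfloor>t + s\<rfloor>))"

text \<open>omega = (eta,t) identified with the ultrafilter {A + t : A in eta} on R+.\<close>
definition uf_of :: "nat filter \<times> real \<Rightarrow> real filter" where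
  "uf_of \<omega> = (case \<omega> of (\<eta>, t) \<Rightarrow> filtermap (\<lambda>n. real n + t) \<eta>)"

text \<open>Continuous extension f-bar to Omega: f-bar(omega) = omega-lim f.\<close>
definition fbar :: "(real \<Rightarrow> real) \<Rightarrow> nat filter \<times> real \<Rightarrow> real" where
  "fbar f \<omega> = Lim (uf_of \<omega>) f"

definition f_omega :: "(real \<Rightarrow> real) \<Rightarrow> nat filter \<times> real \<Rightarrow> real \<Rightarrow> real" where
  "f_omega f \<omega> s = fbar f (omega_flow s \<omega>)"

definition unbounded_uf :: "real filter \<Rightarrow> bool" where
  "unbounded_uf U \<longleftrightarrow> ultrafilter U \<and> eventually (\<lambda>x. 0 \<le> x) U \<and>
     (\<forall>A. eventually (\<lambda>x. x \<in> A) U \<longrightarrow> \<not> bounded A)"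

definition phiQ :: "real filter \<Rightarrow> nat filter \<times> real \<Rightarrow> (real \<Rightarrow> real) \<Rightarrow> real" where
  "phiQ U \<omega> f = (if f \<in> Cub then Lim U (\<lambda>x. (1 / x) * integral {0..x} (f_omega f \<omega>)) else 0)"

definition Qset :: "((real \<Rightarrow> real) \<Rightarrow> real) set" where
  "Qset = {phiQ U \<omega> | U \<omega>. \<omega> \<in> Omega_star \<and> unbounded_uf U}"

definition conv_hull_fun :: "(('a \<Rightarrow> real)) set \<Rightarrow> ('a \<Rightarrow> real) set" where
  "conv_hull_fun S = {(\<lambda>f. \<Sum>i<n. a i * \<phi> i f) | (n::nat) a \<phi>.
      (\<forall>i<n. 0 \<le> a i \<and> \<phi> i \<in> S) \<and> (\<Sum>i<n. a i) = 1}"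

text \<open>Weak* topology = topology of pointwise convergence on Cub; on functionals vanishing
outside Cub this is the product topology of the function space (Function_Topology).\<close>

end

theory Submission
  imports Defs
begin

lemma uf_exists:
  fixes F :: "'a filter"
  assumes F: "F \<noteq> bot"
  shows "\<exists>U\<le>F. ultrafilter U"
proof -
  let ?X = "{G. G \<noteq> bot \<and> G \<le> F}"
  let ?R = "{(b, a). a \<noteq> bot \<and> a \<le> b \<and> b \<le> F}"
  have bot_notin_R: "c \<in> Chains ?R \<Longrightarrow> bot \<notin> c" for c
    by (auto simp: Chains_def)
  have [simp]: "Field ?R = ?X"
    by (auto simp: Field_def bot_unique)
  have "\<exists>m\<in>Field ?R. \<forall>a\<in>Field ?R. (m, a) \<in> ?R \<longrightarrow> a = m" (is "\<exists>m\<in>?A. ?B m")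
  proof (rule Zorns_po_lemma)
    show "Partial_order ?R"
      by (auto simp: partial_order_on_def preorder_on_def
          antisym_def refl_on_def trans_def Field_def bot_unique)
    show "\<exists>u\<in>Field ?R. \<forall>a\<in>C. (a, u) \<in> ?R" if C: "C \<in> Chains ?R" for C
    proof (simp, intro exI conjI ballI)
      have Inf_C: "Inf C \<noteq> bot" "Inf C \<le> F" if "C \<noteq> {}"
      proof -
        from C that have "Inf C = bot \<longleftrightarrow> (\<exists>x\<in>C. x = bot)"
          unfolding trivial_limit_def by (intro eventually_Inf_base) (auto simp: Chains_def)
        with C show "Inf C \<noteq> bot"
          by (simp add: bot_notin_R)
        from that obtain x where "x \<in> C" by auto
        with C show "Inf C \<le> F"
          by (auto intro!: Inf_lower2[of x] simp: Chains_def)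
      qed
      then have [simp]: "inf F (Inf C) = (if C = {} then F else Inf C)"
        using C by (auto simp add: inf_absorb2)
      from C show "inf F (Inf C) \<noteq> bot"
        by (simp add: F Inf_C)
      from C show "inf F (Inf C) \<le> F"
        by (simp add: Chains_def Inf_C F)
      with C show "inf F (Inf C) \<le> x" "x \<le> F" if "x \<in> C" for x
        using that  by (auto intro: Inf_lower simp: Chains_def)
    qed
  qed
  then obtain U where U: "U \<in> ?A" "?B U" ..
  have "ultrafilter U"
    unfolding ultrafilter_def
  proof (intro conjI allI)
    show "U \<noteq> bot" using U by auto
    fix P
    show "eventually P U \<or> (\<forall>\<^sub>Fx in U. \<not> P x)"
    proof (rule disjCI)
      assume "\<not> (\<forall>\<^sub>Fx in U. \<not> P x)"
      then have ne: "inf U (principal {x. P x}) \<noteq> bot"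
        by (simp add: trivial_limit_def eventually_inf_principal not_eventually)
      have "inf U (principal {x. P x}) \<le> U" by simp
      moreover have "inf U (principal {x. P x}) \<le> F" using U by simp (meson inf_le1 order_trans)
      ultimately have Ueq: "U = inf U (principal {x. P x})"
        using U ne by simp (metis inf_le1)
      show "eventually P U"
        by (subst Ueq) (simp add: eventually_inf_principal)
    qed
  qed
  then show ?thesis using U by auto
qed

lemma uf_filtermap:
  assumes "ultrafilter F" shows "ultrafilter (filtermap g F)"
  using assms unfolding ultrafilter_def by (auto simp: eventually_filtermap filtermap_bot_iff)

lemma uf_lim_exists:
  fixes g :: "'a \<Rightarrow> real"
  assumes U: "ultrafilter F" and ev: "eventually (\<lambda>x. \<bar>g x\<bar> \<le> B) F"
  shows "\<exists>L. (g \<longlongrightarrow> L) F"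
proof -
  let ?G = "filtermap g F"
  have uG: "ultrafilter ?G" using uf_filtermap[OF U] .
  have cpt: "compact {-B..B}" by simp
  have "eventually (\<lambda>y. y \<in> {-B..B}) ?G"
    using ev by (auto simp: eventually_filtermap elim!: eventually_mono)
  moreover have "?G \<noteq> bot" using uG unfolding ultrafilter_def by auto
  ultimately obtain L where L: "L \<in> {-B..B}" "inf (nhds L) ?G \<noteq> bot"
    using cpt unfolding compact_filter by blast
  have "?G \<le> nhds L"
  proof (rule filter_leI)
    fix P assume P: "eventually P (nhds L)"
    show "eventually P ?G"
    proof (rule ccontr)
      assume "\<not> eventually P ?G"
      then have "eventually (\<lambda>x. \<not> P x) ?G" using uG unfolding ultrafilter_def by blast
      then have "eventually (\<lambda>x. False) (inf (nhds L) ?G)"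
        unfolding eventually_inf using P by blast
      then show False using L(2) by (simp add: trivial_limit_def)
    qed
  qed
  then show ?thesis by (auto simp: filterlim_def)
qed

lemma uf_Lim:
  fixes g :: "'a \<Rightarrow> real"
  assumes "ultrafilter F" "(g \<longlongrightarrow> L) F" shows "Lim F g = L"
  using assms by (intro tendsto_Lim) (auto simp: ultrafilter_def)

lemma Cub_iff: "f \<in> Cub \<longleftrightarrow> uniformly_continuous_on {0..} f \<and> (\<exists>B. \<forall>x\<ge>0. \<bar>f x\<bar> \<le> B) \<and> (\<forall>x<0. f x = f 0)"
proof -
  have "bounded (f ` {0..}) \<longleftrightarrow> (\<exists>B. \<forall>x\<ge>0. \<bar>f x\<bar> \<le> B)"
    unfolding bounded_iff by (auto simp: real_norm_def)
  then show ?thesis unfolding Cub_def by auto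
qed

lemma Cub_max: "f \<in> Cub \<Longrightarrow> f x = f (max x 0)"
  unfolding Cub_def by (cases "x < 0") (auto simp: max_def)

lemma Cub_bound: assumes "f \<in> Cub" obtains B where "\<And>x. \<bar>f x\<bar> \<le> B" "B \<ge> 0"
proof -
  obtain B where B: "\<forall>x\<ge>0. \<bar>f x\<bar> \<le> B" using assms Cub_iff by blast
  have "\<bar>f x\<bar> \<le> B" for x using Cub_max[OF assms, of x] B by (metis max.cobounded2)
  moreover have "B \<ge> 0" using B by (meson abs_ge_zero order_trans order_refl)
  ultimately show ?thesis using that by blast
qed

lemma Cub_uc:
  assumes "f \<in> Cub" "e > 0"
  obtains d where "d > 0" "\<And>x y. \<bar>x - y\<bar> < d \<Longrightarrow> \<bar>f x - f y\<bar> < e"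
proof -
  have uc: "uniformly_continuous_on {0..} f" using assms Cub_iff by blast
  then obtain d where d: "d > 0" "\<forall>x\<in>{0..}. \<forall>x'\<in>{0..}. dist x' x < d \<longrightarrow> dist (f x') (f x) < e"
    using assms(2) unfolding uniformly_continuous_on_def by blast
  have "\<bar>f x - f y\<bar> < e" if "\<bar>x - y\<bar> < d" for x y
  proof -
    have "\<bar>max x 0 - max y 0\<bar> < d" using that d(1) by (auto simp: max_def)
    then have "dist (f (max x 0)) (f (max y 0)) < e" using d(2) by (auto simp: dist_real_def)
    then show ?thesis using Cub_max[OF assms(1), of x] Cub_max[OF assms(1), of y] by (simp add: dist_real_def)
  qed
  then show ?thesis using that d(1) by blast
qed

lemma Cub_cont: assumes "f \<in> Cub" shows "continuous_on UNIV f"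
proof -
  have "uniformly_continuous_on UNIV f"
    unfolding uniformly_continuous_on_def
  proof (intro allI impI)
    fix e :: real assume "e > 0"
    then obtain d where "d > 0" "\<And>x y. \<bar>x - y\<bar> < d \<Longrightarrow> \<bar>f x - f y\<bar> < e" using Cub_uc assms by blast
    then show "\<exists>d>0. \<forall>x\<in>UNIV. \<forall>x'\<in>UNIV. dist x' x < d \<longrightarrow> dist (f x') (f x) < e"
      by (auto simp: dist_real_def)
  qed
  then show ?thesis by (rule uniformly_continuous_imp_continuous)
qed

lemma CubI:
  assumes "\<And>e. e > 0 \<Longrightarrow> \<exists>d>0. \<forall>x y. \<bar>x - y\<bar> < d \<longrightarrow> \<bar>f x - f y\<bar> < e"
    and "\<And>x. \<bar>f x\<bar> \<le> B" and "\<And>x. x < 0 \<Longrightarrow> f x = f 0"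
  shows "f \<in> Cub"
proof -
  have "uniformly_continuous_on {0..} f"
    unfolding uniformly_continuous_on_def
  proof (intro allI impI)
    fix e :: real assume "e > 0"
    then obtain d where "d > 0" "\<forall>x y. \<bar>x - y\<bar> < d \<longrightarrow> \<bar>f x - f y\<bar> < e" using assms(1) by blast
    then show "\<exists>d>0. \<forall>x\<in>{0..}. \<forall>x'\<in>{0..}. dist x' x < d \<longrightarrow> dist (f x') (f x) < e"
      by (auto simp: dist_real_def)
  qed
  then show ?thesis unfolding Cub_iff using assms(2,3) by blast
qed

lemma Cub_add: assumes "f \<in> Cub" "g \<in> Cub" shows "(\<lambda>x. f x + g x) \<in> Cub"
proof -
  obtain B1 where B1: "\<And>x. \<bar>f x\<bar> \<le> B1" using Cub_bound assms(1) by blast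
  obtain B2 where B2: "\<And>x. \<bar>g x\<bar> \<le> B2" using Cub_bound assms(2) by blast
  show ?thesis
  proof (rule CubI[where B="B1+B2"])
    fix e :: real assume e: "e > 0"
    obtain d1 where d1: "d1 > 0" "\<And>x y. \<bar>x - y\<bar> < d1 \<Longrightarrow> \<bar>f x - f y\<bar> < e/2"
      using Cub_uc[OF assms(1), of "e/2"] e by auto
    obtain d2 where d2: "d2 > 0" "\<And>x y. \<bar>x - y\<bar> < d2 \<Longrightarrow> \<bar>g x - g y\<bar> < e/2"
      using Cub_uc[OF assms(2), of "e/2"] e by auto
    show "\<exists>d>0. \<forall>x y. \<bar>x - y\<bar> < d \<longrightarrow> \<bar>f x + g x - (f y + g y)\<bar> < e"
    proof (intro exI[of _ "min d1 d2"] conjI allI impI)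
      fix x y :: real assume "\<bar>x - y\<bar> < min d1 d2"
      then have "\<bar>f x - f y\<bar> < e/2" "\<bar>g x - g y\<bar> < e/2" using d1 d2 by auto
      then show "\<bar>f x + g x - (f y + g y)\<bar> < e" by linarith
    qed (use d1 d2 in auto)
  next
    fix x show "\<bar>f x + g x\<bar> \<le> B1 + B2" using B1[of x] B2[of x] by linarith
  next
    fix x :: real assume "x < 0" then show "f x + g x = f 0 + g 0"
      using assms unfolding Cub_def by auto
  qed
qed

lemma Cub_cmult: assumes "f \<in> Cub" shows "(\<lambda>x. c * f x) \<in> Cub"
proof -
  obtain B where B: "\<And>x. \<bar>f x\<bar> \<le> B" using Cub_bound assms by blast
  show ?thesis
  proof (rule CubI[where B="\<bar>c\<bar>*B"])
    fix e :: real assume e: "e > 0"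
    obtain d where d: "d > 0" "\<And>x y. \<bar>x - y\<bar> < d \<Longrightarrow> \<bar>f x - f y\<bar> < e/(\<bar>c\<bar>+1)"
      using Cub_uc[OF assms(1), of "e/(\<bar>c\<bar>+1)"] e by auto
    show "\<exists>d>0. \<forall>x y. \<bar>x - y\<bar> < d \<longrightarrow> \<bar>c * f x - c * f y\<bar> < e"
    proof (intro exI[of _ d] conjI allI impI)
      fix x y :: real assume "\<bar>x - y\<bar> < d"
      then have h: "\<bar>f x - f y\<bar> < e/(\<bar>c\<bar>+1)" using d by auto
      have "\<bar>c * f x - c * f y\<bar> = \<bar>c\<bar> * \<bar>f x - f y\<bar>" by (simp add: abs_mult[symmetric] algebra_simps)
      also have "\<dots> \<le> (\<bar>c\<bar>+1) * \<bar>f x - f y\<bar>" by (simp add: mult_right_mono)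
      also have "\<dots> < (\<bar>c\<bar>+1) * (e/(\<bar>c\<bar>+1))" using h by (intro mult_strict_left_mono) auto
      also have "\<dots> = e" by simp
      finally show "\<bar>c * f x - c * f y\<bar> < e" .
    qed (use d in auto)
  next
    fix x show "\<bar>c * f x\<bar> \<le> \<bar>c\<bar> * B" using B[of x] by (simp add: abs_mult mult_left_mono)
  next
    fix x :: real assume "x < 0" then show "c * f x = c * f 0"
      using assms unfolding Cub_def by auto
  qed
qed

lemma Cub_const: "(\<lambda>_. c) \<in> Cub"
  by (rule CubI[where B="\<bar>c\<bar>"]) auto

lemma Cub_shift: assumes "f \<in> Cub" "s \<ge> 0" shows "shiftT s f \<in> Cub"
proof -
  obtain B where B: "\<And>x. \<bar>f x\<bar> \<le> B" using Cub_bound assms by blast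
  show ?thesis
  proof (rule CubI[where B=B])
    fix e :: real assume e: "e > 0"
    obtain d where d: "d > 0" "\<And>x y. \<bar>x - y\<bar> < d \<Longrightarrow> \<bar>f x - f y\<bar> < e"
      using Cub_uc[OF assms(1) e] by auto
    show "\<exists>d>0. \<forall>x y. \<bar>x - y\<bar> < d \<longrightarrow> \<bar>shiftT s f x - shiftT s f y\<bar> < e"
    proof (intro exI[of _ d] conjI allI impI)
      fix x y :: real assume "\<bar>x - y\<bar> < d"
      then have "\<bar>(max x 0 + s) - (max y 0 + s)\<bar> < d" by (auto simp: max_def)
      then show "\<bar>shiftT s f x - shiftT s f y\<bar> < e" unfolding shiftT_def using d by blast
    qed (use d in auto)
  qed (auto simp: shiftT_def B)
qed

lemma Cub_sum: "finite I \<Longrightarrow> (\<And>i. i \<in> I \<Longrightarrow> g i \<in> Cub) \<Longrightarrow> (\<lambda>x. \<Sum>i\<in>I. c i * g i x) \<in> Cub"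
proof (induction I rule: finite_induct)
  case empty then show ?case using Cub_const[of 0] by simp
next
  case (insert a I)
  have "(\<lambda>x. c a * g a x + (\<Sum>i\<in>I. c i * g i x)) \<in> Cub"
    using insert by (intro Cub_add Cub_cmult) auto
  then show ?case using insert by simp
qed

lemma im_add: "is_T_invariant_mean \<phi> \<Longrightarrow> f \<in> Cub \<Longrightarrow> g \<in> Cub \<Longrightarrow> \<phi> (\<lambda>x. f x + g x) = \<phi> f + \<phi> g"
  unfolding is_T_invariant_mean_def by blast
lemma im_cmult: "is_T_invariant_mean \<phi> \<Longrightarrow> f \<in> Cub \<Longrightarrow> \<phi> (\<lambda>x. c * f x) = c * \<phi> f"
  unfolding is_T_invariant_mean_def by blast
lemma im_pos: "is_T_invariant_mean \<phi> \<Longrightarrow> f \<in> Cub \<Longrightarrow> (\<And>x. x \<ge> 0 \<Longrightarrow> f x \<ge> 0) \<Longrightarrow> \<phi> f \<ge> 0"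
  unfolding is_T_invariant_mean_def by blast
lemma im_one: "is_T_invariant_mean \<phi> \<Longrightarrow> \<phi> (\<lambda>_. 1) = 1"
  unfolding is_T_invariant_mean_def by blast
lemma im_shift: "is_T_invariant_mean \<phi> \<Longrightarrow> s \<ge> 0 \<Longrightarrow> f \<in> Cub \<Longrightarrow> \<phi> (shiftT s f) = \<phi> f"
  unfolding is_T_invariant_mean_def by blast
lemma im_out: "is_T_invariant_mean \<phi> \<Longrightarrow> f \<notin> Cub \<Longrightarrow> \<phi> f = 0"
  unfolding is_T_invariant_mean_def by blast

lemma im_const: "is_T_invariant_mean \<phi> \<Longrightarrow> \<phi> (\<lambda>_. c) = c"
  using im_cmult[of \<phi> "\<lambda>_. 1" c] im_one[of \<phi>] Cub_const[of 1] by simp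

lemma im_sum: assumes "is_T_invariant_mean \<phi>"
  shows "finite I \<Longrightarrow> (\<And>i. i \<in> I \<Longrightarrow> g i \<in> Cub) \<Longrightarrow> \<phi> (\<lambda>x. \<Sum>i\<in>I. c i * g i x) = (\<Sum>i\<in>I. c i * \<phi> (g i))"
proof (induction I rule: finite_induct)
  case empty then show ?case using im_const[OF assms, of 0] by simp
next
  case (insert a I)
  have "\<phi> (\<lambda>x. c a * g a x + (\<Sum>i\<in>I. c i * g i x)) = \<phi> (\<lambda>x. c a * g a x) + \<phi> (\<lambda>x. \<Sum>i\<in>I. c i * g i x)"
    using insert by (intro im_add[OF assms] Cub_cmult Cub_sum) auto
  also have "\<dots> = c a * \<phi> (g a) + (\<Sum>i\<in>I. c i * \<phi> (g i))"
    using insert im_cmult[OF assms] by auto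
  finally show ?case using insert by simp
qed

lemma im_diff: assumes "is_T_invariant_mean \<phi>" "f \<in> Cub" "g \<in> Cub"
  shows "\<phi> (\<lambda>x. f x - g x) = \<phi> f - \<phi> g"
proof -
  have "\<phi> (\<lambda>x. f x + (-1) * g x) = \<phi> f + \<phi> (\<lambda>x. (-1) * g x)"
    by (rule im_add[OF assms(1,2) Cub_cmult[OF assms(3)]])
  moreover have "\<phi> (\<lambda>x. (-1) * g x) = - \<phi> g" using im_cmult[OF assms(1,3), of "-1"] by simp
  ultimately show ?thesis by simp
qed

lemma Cub_diff: "f \<in> Cub \<Longrightarrow> g \<in> Cub \<Longrightarrow> (\<lambda>x. f x - g x) \<in> Cub"
proof -
  assume a: "f \<in> Cub" "g \<in> Cub"
  have "(\<lambda>x. f x + (-1) * g x) \<in> Cub" using a by (intro Cub_add Cub_cmult)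
  moreover have "(\<lambda>x. f x + (-1) * g x) = (\<lambda>x. f x - g x)" by auto
  ultimately show ?thesis by simp
qed

lemma im_mono: assumes "is_T_invariant_mean \<phi>" "f \<in> Cub" "g \<in> Cub" "\<And>x. x \<ge> 0 \<Longrightarrow> f x \<le> g x"
  shows "\<phi> f \<le> \<phi> g"
proof -
  have "\<phi> (\<lambda>x. g x - f x) \<ge> 0"
    by (rule im_pos[OF assms(1) Cub_diff[OF assms(3,2)]]) (use assms(4) in auto)
  then show ?thesis using im_diff[OF assms(1,3,2)] by simp
qed

lemma im_le: assumes "is_T_invariant_mean \<phi>" "f \<in> Cub" "\<And>x. x \<ge> 0 \<Longrightarrow> f x \<le> B"
  shows "\<phi> f \<le> B"
proof -
  have "\<phi> f \<le> \<phi> (\<lambda>_. B)" by (rule im_mono[OF assms(1,2) Cub_const]) (rule assms(3))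
  then show ?thesis using im_const[OF assms(1)] by simp
qed

lemma im_ge: assumes "is_T_invariant_mean \<phi>" "f \<in> Cub" "\<And>x. x \<ge> 0 \<Longrightarrow> B \<le> f x"
  shows "B \<le> \<phi> f"
proof -
  have "\<phi> (\<lambda>_. B) \<le> \<phi> f" by (rule im_mono[OF assms(1) Cub_const assms(2)]) (rule assms(3))
  then show ?thesis using im_const[OF assms(1)] by simp
qed

lemma im_abs: assumes "is_T_invariant_mean \<phi>" "\<And>x. x \<ge> 0 \<Longrightarrow> \<bar>f x\<bar> \<le> B"
  shows "\<bar>\<phi> f\<bar> \<le> B"
proof (cases "f \<in> Cub")
  case True
  have u: "f x \<le> B" and l: "-B \<le> f x" if "x \<ge> 0" for x using assms(2)[OF that] by linarith+
  have "\<phi> f \<le> B" by (rule im_le[OF assms(1) True u])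
  moreover have "-B \<le> \<phi> f" by (rule im_ge[OF assms(1) True l])
  ultimately show ?thesis by linarith
next
  case False
  have "0 \<le> B" using assms(2)[of 0] by linarith
  then show ?thesis using im_out[OF assms(1) False] by simp
qed

lemma im_convex:
  assumes "\<forall>i<n. 0 \<le> a i \<and> is_T_invariant_mean (\<phi> i)" "(\<Sum>i<n. a i) = 1"
  shows "is_T_invariant_mean (\<lambda>f. \<Sum>i<n. a i * \<phi> i f)"
  unfolding is_T_invariant_mean_def
proof (intro conjI allI impI ballI)
  fix f assume "f \<notin> Cub" then show "(\<Sum>i<n. a i * \<phi> i f) = 0" using assms im_out by (intro sum.neutral) auto
next
  fix f g assume "f \<in> Cub" "g \<in> Cub"
  then have e: "\<And>i. i<n \<Longrightarrow> a i * \<phi> i (\<lambda>x. f x + g x) = a i * \<phi> i f + a i * \<phi> i g"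
  proof -
    fix i assume "i < n"
    then have m: "is_T_invariant_mean (\<phi> i)" using assms by blast
    show "a i * \<phi> i (\<lambda>x. f x + g x) = a i * \<phi> i f + a i * \<phi> i g"
      using im_add[OF m \<open>f \<in> Cub\<close> \<open>g \<in> Cub\<close>] by (simp add: distrib_left)
  qed
  have "(\<Sum>i<n. a i * \<phi> i (\<lambda>x. f x + g x)) = (\<Sum>i<n. a i * \<phi> i f + a i * \<phi> i g)"
    by (rule sum.cong) (auto simp: e)
  then show "(\<Sum>i<n. a i * \<phi> i (\<lambda>x. f x + g x)) = (\<Sum>i<n. a i * \<phi> i f) + (\<Sum>i<n. a i * \<phi> i g)"
    by (simp add: sum.distrib)
next
  fix f c assume "f \<in> Cub"
  have "(\<Sum>i<n. a i * \<phi> i (\<lambda>x. c * f x)) = (\<Sum>i<n. c * (a i * \<phi> i f))"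
  proof (rule sum.cong)
    fix i assume "i \<in> {..<n}"
    then have m: "is_T_invariant_mean (\<phi> i)" using assms by blast
    show "a i * \<phi> i (\<lambda>x. c * f x) = c * (a i * \<phi> i f)"
      using im_cmult[OF m \<open>f \<in> Cub\<close>, of c] by simp
  qed simp
  then show "(\<Sum>i<n. a i * \<phi> i (\<lambda>x. c * f x)) = c * (\<Sum>i<n. a i * \<phi> i f)"
    by (simp add: sum_distrib_left)
next
  fix f assume "f \<in> Cub" "\<forall>x\<ge>0. 0 \<le> f x"
  then show "0 \<le> (\<Sum>i<n. a i * \<phi> i f)" using assms im_pos by (intro sum_nonneg) simp
next
  have "(\<Sum>i<n. a i * \<phi> i (\<lambda>_. 1)) = (\<Sum>i<n. a i)"
    by (rule sum.cong) (use assms im_one in auto)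
  then show "(\<Sum>i<n. a i * \<phi> i (\<lambda>_. 1)) = 1" using assms by simp
next
  fix s :: real and f assume "0 \<le> s" "f \<in> Cub"
  then show "(\<Sum>i<n. a i * \<phi> i (shiftT s f)) = (\<Sum>i<n. a i * \<phi> i f)"
    by (intro sum.cong) (use assms im_shift in auto)
qed

lemma ev_cont: "continuous_on UNIV (\<lambda>\<phi>::('a \<Rightarrow> real) \<Rightarrow> real. \<phi> f)"
  by simp

lemma closed_imp_const: "closed {x. Q x} \<Longrightarrow> closed {x. P \<longrightarrow> Q x}"
  by (cases P) auto

lemma im_closed: "closed {\<phi>. is_T_invariant_mean \<phi>}"
proof -
  have c: "continuous_on UNIV (\<lambda>\<phi>::(real \<Rightarrow> real) \<Rightarrow> real. \<phi> f)" for f by simp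
  have "{\<phi>. is_T_invariant_mean \<phi>} =
     {\<phi>. (\<forall>f. f \<notin> Cub \<longrightarrow> \<phi> f = 0) \<and>
     (\<forall>f. f \<in> Cub \<longrightarrow> (\<forall>g. g \<in> Cub \<longrightarrow> \<phi> (\<lambda>x. f x + g x) = \<phi> f + \<phi> g)) \<and>
     (\<forall>f. f \<in> Cub \<longrightarrow> (\<forall>c. \<phi> (\<lambda>x. c * f x) = c * \<phi> f)) \<and>
     (\<forall>f. f \<in> Cub \<longrightarrow> (\<forall>x\<ge>0. f x \<ge> 0) \<longrightarrow> 0 \<le> \<phi> f) \<and>
     \<phi> (\<lambda>_. 1) = 1 \<and>
     (\<forall>s. s \<ge> 0 \<longrightarrow> (\<forall>f. f\<in>Cub \<longrightarrow> \<phi> (shiftT s f) = \<phi> f))}"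
    unfolding is_T_invariant_mean_def Ball_def ..
  also have "closed \<dots>"
    by (intro closed_Collect_conj closed_Collect_all closed_imp_const closed_Collect_eq closed_Collect_le
        c continuous_intros)
  finally show ?thesis .
qed

lemma conv_im: "(\<And>\<phi>. \<phi> \<in> S \<Longrightarrow> is_T_invariant_mean \<phi>) \<Longrightarrow> \<psi> \<in> conv_hull_fun S \<Longrightarrow> is_T_invariant_mean \<psi>"
  unfolding conv_hull_fun_def using im_convex by blast

lemma free_ev_ge: assumes "free_uf \<eta>" shows "eventually (\<lambda>m. N \<le> m) \<eta>"
proof -
  have u: "ultrafilter \<eta>" using assms free_uf_def by blast
  have "eventually (\<lambda>m. m \<noteq> n) \<eta>" for n
    using assms u unfolding free_uf_def ultrafilter_def by blast
  then have "eventually (\<lambda>m. \<forall>n\<in>{..<N}. m \<noteq> n) \<eta>"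
    by (intro eventually_ball_finite) auto
  then show ?thesis by (rule eventually_mono) (auto simp: not_less[symmetric])
qed

lemma free_uf_uf: "free_uf \<eta> \<Longrightarrow> ultrafilter \<eta>" by (simp add: free_uf_def)
lemma uf_nonbot: "ultrafilter F \<Longrightarrow> F \<noteq> bot" by (simp add: ultrafilter_def)

lemma Lim_cong_ev: assumes "eventually (\<lambda>x. f x = g x) F" shows "Lim F f = Lim F g"
proof -
  have "(\<lambda>l. (f \<longlongrightarrow> l) F) = (\<lambda>l. (g \<longlongrightarrow> l) F)"
    by (rule ext) (rule tendsto_cong[OF assms])
  then show ?thesis unfolding Topological_Spaces.Lim_def by (rule arg_cong)
qed

lemma fo_eq: assumes "free_uf \<eta>"
  shows "f_omega f (\<eta>, t) s = Lim \<eta> (\<lambda>n. f (real n + t + s))"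
proof -
  define k where "k = \<lfloor>t + s\<rfloor>"
  have "f_omega f (\<eta>, t) s = Lim (filtermap (\<lambda>n. real (nat (int n + k)) + (t + s - of_int k)) \<eta>) f"
    unfolding f_omega_def omega_flow_def fbar_def uf_of_def tau_pow_def k_def
    by (simp add: filtermap_filtermap)
  also have "\<dots> = Lim \<eta> (\<lambda>n. f (real (nat (int n + k)) + (t + s - of_int k)))"
    unfolding Topological_Spaces.Lim_def filterlim_filtermap ..
  also have "\<dots> = Lim \<eta> (\<lambda>n. f (real n + t + s))"
  proof (rule Lim_cong_ev)
    show "\<forall>\<^sub>F x in \<eta>. f (real (nat (int x + k)) + (t + s - of_int k)) = f (real x + t + s)"
      using free_ev_ge[OF assms, of "nat (- k)"]
    proof (rule eventually_mono)
      fix n assume "nat (- k) \<le> n"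
      then have "int n + k \<ge> 0" by linarith
      then have "real (nat (int n + k)) = real n + of_int k" by (metis of_int_of_nat_eq of_int_add nat_0_le)
      then show "f (real (nat (int n + k)) + (t + s - of_int k)) = f (real n + t + s)" by (simp add: algebra_simps)
    qed
  qed
  finally show ?thesis .
qed

lemma nat_ceil_le: "nat \<lceil>a\<rceil> \<le> n \<Longrightarrow> a \<le> real n"
  by (metis ceiling_le_iff nat_le_iff of_int_of_nat_eq)
lemma fo_tendsto: assumes "free_uf \<eta>" "f \<in> Cub"
  shows "((\<lambda>n. f (real n + t + s)) \<longlongrightarrow> f_omega f (\<eta>, t) s) \<eta>"
proof -
  obtain B where B: "\<And>x. \<bar>f x\<bar> \<le> B" using Cub_bound assms(2) by blast
  obtain L where L: "((\<lambda>n. f (real n + t + s)) \<longlongrightarrow> L) \<eta>"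
    using uf_lim_exists[OF free_uf_uf[OF assms(1)], of "\<lambda>n. f (real n + t + s)" B] B by auto
  then show ?thesis using fo_eq[OF assms(1)] uf_Lim[OF free_uf_uf[OF assms(1)] L] by simp
qed

lemma fo_bound: assumes "free_uf \<eta>" "f \<in> Cub" "\<And>x. \<bar>f x\<bar> \<le> B"
  shows "\<bar>f_omega f (\<eta>, t) s\<bar> \<le> B"
  using tendsto_rabs[OF fo_tendsto[OF assms(1,2), of t s]] assms(3)
  by (intro tendsto_upperbound[where f="\<lambda>n. \<bar>f (real n + t + s)\<bar>"])
     (use uf_nonbot[OF free_uf_uf[OF assms(1)]] in auto)

lemma fo_uc: assumes "free_uf \<eta>" "f \<in> Cub" "\<And>x y. \<bar>x - y\<bar> < d \<Longrightarrow> \<bar>f x - f y\<bar> < e" "\<bar>s - s'\<bar> < d"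
  shows "\<bar>f_omega f (\<eta>, t) s - f_omega f (\<eta>, t) s'\<bar> \<le> e"
proof -
  have "((\<lambda>n. \<bar>f (real n + t + s) - f (real n + t + s')\<bar>) \<longlongrightarrow> \<bar>f_omega f (\<eta>, t) s - f_omega f (\<eta>, t) s'\<bar>) \<eta>"
    by (intro tendsto_rabs tendsto_diff fo_tendsto assms)
  moreover have "\<bar>f (real n + t + s) - f (real n + t + s')\<bar> \<le> e" for n
    using assms(3)[of "real n + t + s" "real n + t + s'"] assms(4) by simp
  ultimately show ?thesis
    by (intro tendsto_upperbound[where f="\<lambda>n. \<bar>f (real n + t + s) - f (real n + t + s')\<bar>"])
       (use uf_nonbot[OF free_uf_uf[OF assms(1)]] in auto)
qed

lemma fo_cont: assumes "free_uf \<eta>" "f \<in> Cub"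
  shows "continuous_on UNIV (f_omega f (\<eta>, t))"
proof -
  have "uniformly_continuous_on UNIV (f_omega f (\<eta>, t))"
    unfolding uniformly_continuous_on_def
  proof (intro allI impI)
    fix e :: real assume "e > 0"
    then obtain d where d: "d > 0" "\<And>x y. \<bar>x - y\<bar> < d \<Longrightarrow> \<bar>f x - f y\<bar> < e/2"
      using Cub_uc[OF assms(2), of "e/2"] by auto
    have "\<bar>f_omega f (\<eta>, t) s - f_omega f (\<eta>, t) s'\<bar> \<le> e/2" if "\<bar>s - s'\<bar> < d" for s s'
      by (rule fo_uc[OF assms d(2) that])
    then show "\<exists>d>0. \<forall>x\<in>UNIV. \<forall>x'\<in>UNIV. dist x' x < d \<longrightarrow> dist (f_omega f (\<eta>, t) x') (f_omega f (\<eta>, t) x) < e"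
      using d(1) \<open>e > 0\<close> by (intro exI[of _ d]) (force simp: dist_real_def abs_minus_commute)
  qed
  then show ?thesis by (rule uniformly_continuous_imp_continuous)
qed

lemma fo_add: assumes "free_uf \<eta>" "f \<in> Cub" "g \<in> Cub"
  shows "f_omega (\<lambda>x. f x + g x) (\<eta>, t) s = f_omega f (\<eta>, t) s + f_omega g (\<eta>, t) s"
  using fo_eq[OF assms(1), of "\<lambda>x. f x + g x"] uf_Lim[OF free_uf_uf[OF assms(1)]
     tendsto_add[OF fo_tendsto[OF assms(1,2), of t s] fo_tendsto[OF assms(1,3), of t s]]] by simp

lemma fo_cmult: assumes "free_uf \<eta>" "f \<in> Cub"
  shows "f_omega (\<lambda>x. c * f x) (\<eta>, t) s = c * f_omega f (\<eta>, t) s"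
  using fo_eq[OF assms(1), of "\<lambda>x. c * f x"] uf_Lim[OF free_uf_uf[OF assms(1)]
     tendsto_mult[OF tendsto_const[of c] fo_tendsto[OF assms(1,2), of t s]]] by simp

lemma fo_const: assumes "free_uf \<eta>"
  shows "f_omega (\<lambda>_. c) (\<eta>, t) s = c"
  using fo_eq[OF assms(1), of "\<lambda>_. c"] uf_Lim[OF free_uf_uf[OF assms(1)] tendsto_const[of c]] by simp

lemma fo_nonneg: assumes "free_uf \<eta>" "f \<in> Cub" "\<And>x. x \<ge> 0 \<Longrightarrow> f x \<ge> 0"
  shows "f_omega f (\<eta>, t) s \<ge> 0"
proof (rule tendsto_lowerbound[OF fo_tendsto[OF assms(1,2), of t s]])
  show "\<forall>\<^sub>F n in \<eta>. 0 \<le> f (real n + t + s)"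
    using free_ev_ge[OF assms(1), of "nat \<lceil>- t - s\<rceil>"]
    by (rule eventually_mono) (intro assms(3), drule nat_ceil_le, linarith)
qed (use uf_nonbot[OF free_uf_uf[OF assms(1)]] in auto)

lemma fo_shift: assumes "free_uf \<eta>" "f \<in> Cub"
  shows "f_omega (shiftT r f) (\<eta>, t) s = f_omega f (\<eta>, t) (s + r)"
proof -
  have "f_omega (shiftT r f) (\<eta>, t) s = Lim \<eta> (\<lambda>n. f (max (real n + t + s) 0 + r))"
    by (simp add: fo_eq[OF assms(1)] shiftT_def)
  also have "\<dots> = Lim \<eta> (\<lambda>n. f (real n + t + (s + r)))"
    using free_ev_ge[OF assms(1), of "nat \<lceil>- t - s\<rceil>"]
  proof (intro Lim_cong_ev, elim eventually_mono)
    fix n assume "nat \<lceil>- t - s\<rceil> \<le> n"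
    then have "real n + t + s \<ge> 0" using nat_ceil_le by fastforce
    then show "f (max (real n + t + s) 0 + r) = f (real n + t + (s + r))" by (simp add: algebra_simps)
  qed
  finally show ?thesis by (simp add: fo_eq[OF assms(1)])
qed

lemma cint: fixes g :: "real \<Rightarrow> real" shows "continuous_on UNIV g \<Longrightarrow> g integrable_on {a..b}"
  by (rule integrable_continuous_interval, rule continuous_on_subset[of UNIV]) auto

lemma int_le_const: fixes g :: "real \<Rightarrow> real" assumes "a \<le> b" "continuous_on UNIV g" "\<And>x. x \<in> {a..b} \<Longrightarrow> g x \<le> c"
  shows "integral {a..b} g \<le> c * (b - a)"
proof -
  have "integral {a..b} g \<le> integral {a..b} (\<lambda>_. c)"
    by (rule integral_le[OF cint[OF assms(2)] cint]) (use assms(3) in auto)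
  then show ?thesis using assms(1) by (simp add: mult.commute)
qed

lemma int_ge_const: fixes g :: "real \<Rightarrow> real" assumes "a \<le> b" "continuous_on UNIV g" "\<And>x. x \<in> {a..b} \<Longrightarrow> c \<le> g x"
  shows "c * (b - a) \<le> integral {a..b} g"
proof -
  have "integral {a..b} (\<lambda>_. c) \<le> integral {a..b} g"
    by (rule integral_le[OF cint cint[OF assms(2)]]) (use assms(3) in auto)
  then show ?thesis using assms(1) by (simp add: mult.commute)
qed

lemma int_abs_le: fixes g :: "real \<Rightarrow> real" assumes "a \<le> b" "continuous_on UNIV g" "\<And>x. x \<in> {a..b} \<Longrightarrow> \<bar>g x\<bar> \<le> c"
  shows "\<bar>integral {a..b} g\<bar> \<le> c * (b - a)"
proof -
  have u: "\<And>x. x \<in> {a..b} \<Longrightarrow> g x \<le> c" and l: "\<And>x. x \<in> {a..b} \<Longrightarrow> -c \<le> g x"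
    using assms(3) by (fastforce simp: abs_le_iff)+
  have "integral {a..b} g \<le> c * (b - a)" by (rule int_le_const[OF assms(1,2) u])
  moreover have "(-c) * (b - a) \<le> integral {a..b} g" by (rule int_ge_const[OF assms(1,2) l])
  ultimately show ?thesis by (simp add: abs_le_iff)
qed

lemma unb_ev_gt: assumes "unbounded_uf U" shows "eventually (\<lambda>x. M < x) U"
proof (rule ccontr)
  assume "\<not> eventually (\<lambda>x. M < x) U"
  then have "eventually (\<lambda>x. \<not> M < x) U" using assms unfolding unbounded_uf_def ultrafilter_def by blast
  moreover have "eventually (\<lambda>x. 0 \<le> x) U" using assms unfolding unbounded_uf_def by blast
  ultimately have "eventually (\<lambda>x. x \<in> {0..M}) U" by (auto elim: eventually_elim2)
  moreover have "bounded {0..M}" by simp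
  ultimately show False using assms unfolding unbounded_uf_def by blast
qed

lemma unb_uf: "unbounded_uf U \<Longrightarrow> ultrafilter U" by (simp add: unbounded_uf_def)

lemma unb_at_top: assumes "unbounded_uf U" shows "filterlim (\<lambda>x. x) at_top U"
  unfolding filterlim_at_top using unb_ev_gt[OF assms] by (meson eventually_mono less_imp_le)

definition avg :: "(real \<Rightarrow> real) \<Rightarrow> nat filter \<times> real \<Rightarrow> real \<Rightarrow> real" where
  "avg f \<omega> x = (1 / x) * integral {0..x} (f_omega f \<omega>)"

lemma avg_bound: assumes "free_uf \<eta>" "f \<in> Cub" "\<And>x. \<bar>f x\<bar> \<le> B" "x > 0"
  shows "\<bar>avg f (\<eta>, t) x\<bar> \<le> B"
proof -
  have "\<bar>integral {0..x} (f_omega f (\<eta>, t))\<bar> \<le> B * (x - 0)"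
    by (rule int_abs_le) (use assms fo_cont fo_bound in auto)
  then show ?thesis using assms(4) unfolding avg_def by (simp add: abs_mult field_simps)
qed

lemma phiQ_tendsto: assumes "free_uf \<eta>" "unbounded_uf U" "f \<in> Cub"
  shows "(avg f (\<eta>, t) \<longlongrightarrow> phiQ U (\<eta>, t) f) U"
proof -
  obtain B where B: "\<And>x. \<bar>f x\<bar> \<le> B" using Cub_bound assms(3) by blast
  have "eventually (\<lambda>x. \<bar>avg f (\<eta>, t) x\<bar> \<le> B) U"
    using unb_ev_gt[OF assms(2), of 0] by (rule eventually_mono) (rule avg_bound[OF assms(1,3) B])
  then obtain L where L: "(avg f (\<eta>, t) \<longlongrightarrow> L) U" using uf_lim_exists[OF unb_uf[OF assms(2)]] by blast
  have "phiQ U (\<eta>, t) f = Lim U (avg f (\<eta>, t))"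
    using assms(3) unfolding phiQ_def avg_def by simp
  then show ?thesis using uf_Lim[OF unb_uf[OF assms(2)] L] L by simp
qed

lemma phiQ_eq: assumes "free_uf \<eta>" "unbounded_uf U" "f \<in> Cub" "(avg f (\<eta>, t) \<longlongrightarrow> L) U"
  shows "phiQ U (\<eta>, t) f = L"
  using tendsto_unique[OF uf_nonbot[OF unb_uf[OF assms(2)]] phiQ_tendsto[OF assms(1-3)] assms(4)] .

lemma phiQ_eq_ev: assumes "free_uf \<eta>" "unbounded_uf U" "f \<in> Cub" "(g \<longlongrightarrow> L) U"
  "eventually (\<lambda>x. avg f (\<eta>, t) x = g x) U"
  shows "phiQ U (\<eta>, t) f = L"
  using phiQ_eq[OF assms(1-3)] assms(4,5) tendsto_cong by blast

lemma phiQ_im: assumes "\<omega> \<in> Omega_star" "unbounded_uf U"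
  shows "is_T_invariant_mean (phiQ U \<omega>)"
proof -
  obtain \<eta> t where \<omega>: "\<omega> = (\<eta>, t)" and \<eta>: "free_uf \<eta>" using assms(1) unfolding Omega_star_def by auto
  have U: "unbounded_uf U" by fact
  have ci: "integral {0..x} (\<lambda>s. f_omega f (\<eta>, t) s + f_omega g (\<eta>, t) s)
      = integral {0..x} (f_omega f (\<eta>, t)) + integral {0..x} (f_omega g (\<eta>, t))"
    if "f \<in> Cub" "g \<in> Cub" for f g x
    by (rule integral_add) (use that fo_cont[OF \<eta>] cint in auto)
  show ?thesis unfolding is_T_invariant_mean_def \<omega>
  proof (intro conjI allI impI ballI)
    fix f assume "f \<notin> Cub" then show "phiQ U (\<eta>, t) f = 0" by (simp add: phiQ_def)
  next
    fix f g assume fg: "f \<in> Cub" "g \<in> Cub"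
    have "avg (\<lambda>x. f x + g x) (\<eta>, t) x = avg f (\<eta>, t) x + avg g (\<eta>, t) x" for x
    proof -
      have "f_omega (\<lambda>x. f x + g x) (\<eta>, t) = (\<lambda>s. f_omega f (\<eta>, t) s + f_omega g (\<eta>, t) s)"
        using fo_add[OF \<eta> fg] by (intro ext) simp
      then show ?thesis unfolding avg_def using ci[OF fg, of x] by (simp add: algebra_simps)
    qed
    then have e: "avg (\<lambda>x. f x + g x) (\<eta>, t) = (\<lambda>x. avg f (\<eta>, t) x + avg g (\<eta>, t) x)" by (rule ext)
    show "phiQ U (\<eta>, t) (\<lambda>x. f x + g x) = phiQ U (\<eta>, t) f + phiQ U (\<eta>, t) g"
      by (intro phiQ_eq[OF \<eta> U Cub_add[OF fg]], simp only: e,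
          intro tendsto_add phiQ_tendsto[OF \<eta> U fg(1)] phiQ_tendsto[OF \<eta> U fg(2)])
  next
    fix f c assume f: "f \<in> Cub"
    have "avg (\<lambda>x. c * f x) (\<eta>, t) x = c * avg f (\<eta>, t) x" for x
    proof -
      have "integral {0..x} (\<lambda>s. c * f_omega f (\<eta>, t) s) = c * integral {0..x} (f_omega f (\<eta>, t))"
        by simp
      moreover have "f_omega (\<lambda>x. c * f x) (\<eta>, t) = (\<lambda>s. c * f_omega f (\<eta>, t) s)"
        using fo_cmult[OF \<eta> f] by (intro ext) simp
      ultimately show ?thesis unfolding avg_def by simp
    qed
    then have e: "avg (\<lambda>x. c * f x) (\<eta>, t) = (\<lambda>x. c * avg f (\<eta>, t) x)" by (rule ext)
    show "phiQ U (\<eta>, t) (\<lambda>x. c * f x) = c * phiQ U (\<eta>, t) f"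
      by (intro phiQ_eq[OF \<eta> U Cub_cmult[OF f]], simp only: e,
          intro tendsto_mult tendsto_const phiQ_tendsto[OF \<eta> U f])
  next
    fix f assume f: "f \<in> Cub" "\<forall>x\<ge>0. 0 \<le> f x"
    have "eventually (\<lambda>x. 0 \<le> avg f (\<eta>, t) x) U"
      using unb_ev_gt[OF U, of 0]
    proof (rule eventually_mono)
      fix x :: real assume "0 < x"
      have "0 \<le> integral {0..x} (f_omega f (\<eta>, t))"
        by (rule integral_nonneg) (use cint fo_cont[OF \<eta> f(1)] fo_nonneg[OF \<eta> f(1)] f(2) in auto)
      then show "0 \<le> avg f (\<eta>, t) x" using \<open>0 < x\<close> unfolding avg_def by simp
    qed
    then show "0 \<le> phiQ U (\<eta>, t) f"
      by (intro tendsto_lowerbound[OF phiQ_tendsto[OF \<eta> U f(1)]]) (use uf_nonbot[OF unb_uf[OF U]] in auto)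
  next
    have c1: "f_omega (\<lambda>_. 1) (\<eta>, t) = (\<lambda>_. 1)" by (intro ext) (simp add: fo_const[OF \<eta>])
    have "eventually (\<lambda>x. avg (\<lambda>_. 1) (\<eta>, t) x = 1) U"
      using unb_ev_gt[OF U, of 0]
      by (rule eventually_mono) (simp add: avg_def c1)
    then show "phiQ U (\<eta>, t) (\<lambda>_. 1) = 1"
      by (intro phiQ_eq_ev[OF \<eta> U Cub_const]) auto
  next
    fix r :: real and f assume r: "0 \<le> r" and f: "f \<in> Cub"
    obtain B where B: "\<And>x. \<bar>f x\<bar> \<le> B" using Cub_bound f by blast
    let ?F = "f_omega f (\<eta>, t)"
    have cF: "continuous_on UNIV ?F" by (rule fo_cont[OF \<eta> f])
    have bF: "\<bar>?F s\<bar> \<le> B" for s by (rule fo_bound[OF \<eta> f B])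
    have "eventually (\<lambda>x. norm (avg (shiftT r f) (\<eta>, t) x - avg f (\<eta>, t) x) \<le> (2 * r * B) * inverse x) U"
      using unb_ev_gt[OF U, of r]
    proof (rule eventually_mono)
      fix x assume x: "r < x"
      have "integral {0..x} (f_omega (shiftT r f) (\<eta>, t)) = integral {0..x} (\<lambda>s. ?F (s + r))"
      proof -
        have "f_omega (shiftT r f) (\<eta>, t) = (\<lambda>s. ?F (s + r))" using fo_shift[OF \<eta> f] by (intro ext) simp
        then show ?thesis by simp
      qed
      also have "\<dots> = integral {r..x+r} ?F"
        using integral_shift_real_ivl[where f="?F" and a=r and b="x + r" and c=r] by simp
      finally have e1: "integral {0..x} (f_omega (shiftT r f) (\<eta>, t)) = integral {r..x+r} ?F" .
      have e2: "integral {0..r} ?F + integral {r..x} ?F = integral {0..x} ?F"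
        by (rule Henstock_Kurzweil_Integration.integral_combine) (use x r cint[OF cF] in auto)
      have e3: "integral {r..x} ?F + integral {x..x+r} ?F = integral {r..x+r} ?F"
        by (rule Henstock_Kurzweil_Integration.integral_combine) (use x r cint[OF cF] in auto)
      have b1: "\<bar>integral {0..r} ?F\<bar> \<le> B * (r - 0)" by (rule int_abs_le) (use r cF bF in auto)
      have b2: "\<bar>integral {x..x+r} ?F\<bar> \<le> B * (x + r - x)" by (rule int_abs_le) (use r cF bF in auto)
      have d: "integral {r..x+r} ?F - integral {0..x} ?F = integral {x..x+r} ?F - integral {0..r} ?F"
        using e2 e3 by linarith
      have "avg (shiftT r f) (\<eta>, t) x - avg f (\<eta>, t) x = (1/x) * (integral {r..x+r} ?F - integral {0..x} ?F)"
        unfolding avg_def e1 by (simp only: right_diff_distrib)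
      also have "\<dots> = (1/x) * (integral {x..x+r} ?F - integral {0..r} ?F)" using d by simp
      also have "\<bar>\<dots>\<bar> \<le> (1/x) * (2 * r * B)"
      proof -
        have "\<bar>integral {x..x+r} ?F - integral {0..r} ?F\<bar> \<le> 2 * r * B"
          using b1 b2 abs_triangle_ineq4[of "integral {x..x+r} ?F" "integral {0..r} ?F"] by (simp add: algebra_simps)
        moreover have "1/x \<ge> 0" using x r by simp
        ultimately show ?thesis using x r by (simp add: abs_mult divide_right_mono)
      qed
      finally show "norm (avg (shiftT r f) (\<eta>, t) x - avg f (\<eta>, t) x) \<le> (2 * r * B) * inverse x"
        by (simp add: field_simps)
    qed
    moreover have "((\<lambda>x. (2 * r * B) * inverse x) \<longlongrightarrow> 0) U"
      using tendsto_mult[OF tendsto_const tendsto_inverse_0_at_top[OF unb_at_top[OF U]], of "2 * r * B"] by simp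
    ultimately have "((\<lambda>x. avg (shiftT r f) (\<eta>, t) x - avg f (\<eta>, t) x) \<longlongrightarrow> 0) U"
      by (rule Lim_null_comparison)
    then have "((\<lambda>x. (avg (shiftT r f) (\<eta>, t) x - avg f (\<eta>, t) x) + avg f (\<eta>, t) x) \<longlongrightarrow> 0 + phiQ U (\<eta>, t) f) U"
      by (intro tendsto_add phiQ_tendsto[OF \<eta> U f])
    then show "phiQ U (\<eta>, t) (shiftT r f) = phiQ U (\<eta>, t) f"
      by (intro phiQ_eq[OF \<eta> U Cub_shift[OF f r]]) simp
  qed
qed

lemma Qset_im: "\<psi> \<in> Qset \<Longrightarrow> is_T_invariant_mean \<psi>"
  unfolding Qset_def by (auto intro: phiQ_im)

lemma closure_sub: "closure (conv_hull_fun Qset) \<subseteq> {\<phi>. is_T_invariant_mean \<phi>}"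
proof (rule closure_minimal)
  show "conv_hull_fun Qset \<subseteq> {\<phi>. is_T_invariant_mean \<phi>}"
  proof
    fix \<psi> assume "\<psi> \<in> conv_hull_fun Qset"
    have "is_T_invariant_mean \<psi>" by (rule conv_im[where S=Qset, OF Qset_im \<open>\<psi> \<in> conv_hull_fun Qset\<close>])
    then show "\<psi> \<in> {\<phi>. is_T_invariant_mean \<phi>}" by simp
  qed
qed (rule im_closed)

lemma hc_shift: assumes "h \<in> Cub" shows "continuous_on UNIV (\<lambda>s. h (s + c))"
  by (rule continuous_on_compose2[OF Cub_cont[OF assms]]) (auto intro: continuous_intros)

lemma int_blocks: fixes h :: "real \<Rightarrow> real"
  assumes "continuous_on UNIV h" "\<delta> \<ge> 0"
  shows "(\<Sum>k<N. integral {z + real k * \<delta> .. z + real k * \<delta> + \<delta>} h) = integral {z .. z + real N * \<delta>} h"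
proof (induction N)
  case 0 then show ?case by simp
next
  case (Suc N)
  have "integral {z .. z + real N * \<delta>} h + integral {z + real N * \<delta> .. z + real N * \<delta> + \<delta>} h
      = integral {z .. z + real N * \<delta> + \<delta>} h"
    by (rule Henstock_Kurzweil_Integration.integral_combine) (use assms cint in auto)
  then show ?case using Suc by (simp add: algebra_simps)
qed

lemma D2a:
  assumes im: "is_T_invariant_mean \<phi>" and h: "h \<in> Cub" and e: "\<epsilon> > 0" and a: "a \<ge> 0"
  shows "\<exists>L\<ge>L0. \<exists>x\<ge>a. L > 0 \<and> (\<phi> h - \<epsilon>) * L \<le> integral {x..x+L} h"
proof (rule ccontr)
  assume contra: "\<not> ?thesis"
  obtain B where B: "\<And>x. \<bar>h x\<bar> \<le> B" using Cub_bound h by blast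
  obtain d where d: "d > 0" "\<And>u v. \<bar>u - v\<bar> < d \<Longrightarrow> \<bar>h u - h v\<bar> < \<epsilon>/2"
    using Cub_uc[OF h, of "\<epsilon>/2"] e by auto
  define \<delta> where "\<delta> = d / 2"
  have \<delta>: "\<delta> > 0" "\<delta> < d" using d(1) by (auto simp: \<delta>_def)
  define hd where "hd x = (1/\<delta>) * integral {0..\<delta>} (\<lambda>s. h (s + max x 0))" for x
  have hd_Cub: "hd \<in> Cub"
  proof (rule CubI[where B=B])
    fix e' :: real assume e': "e' > 0"
    obtain d2 where d2: "d2 > 0" "\<And>u v. \<bar>u - v\<bar> < d2 \<Longrightarrow> \<bar>h u - h v\<bar> < e'/2"
      using Cub_uc[OF h, of "e'/2"] e' by auto
    show "\<exists>d>0. \<forall>x y. \<bar>x - y\<bar> < d \<longrightarrow> \<bar>hd x - hd y\<bar> < e'"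
    proof (intro exI[of _ d2] conjI allI impI)
      fix x y :: real assume xy: "\<bar>x - y\<bar> < d2"
      have m: "\<bar>(s + max x 0) - (s + max y 0)\<bar> < d2" for s using xy by (auto simp: max_def)
      have "integral {0..\<delta>} (\<lambda>s. h (s + max x 0)) - integral {0..\<delta>} (\<lambda>s. h (s + max y 0))
          = integral {0..\<delta>} (\<lambda>s. h (s + max x 0) - h (s + max y 0))"
        by (rule integral_diff[symmetric]) (use cint hc_shift[OF h] in auto)
      also have "\<bar>\<dots>\<bar> \<le> (e'/2) * (\<delta> - 0)"
        by (rule int_abs_le) (use \<delta> d2(2)[OF m] in \<open>auto intro!: continuous_intros hc_shift[OF h] less_imp_le\<close>)
      finally have I: "\<bar>integral {0..\<delta>} (\<lambda>s. h (s + max x 0)) - integral {0..\<delta>} (\<lambda>s. h (s + max y 0))\<bar> \<le> (e'/2) * \<delta>"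
        by simp
      have "hd x - hd y = (1/\<delta>) * (integral {0..\<delta>} (\<lambda>s. h (s + max x 0)) - integral {0..\<delta>} (\<lambda>s. h (s + max y 0)))"
        unfolding hd_def by (simp add: right_diff_distrib)
      then have "\<bar>hd x - hd y\<bar> = (1/\<delta>) * \<bar>integral {0..\<delta>} (\<lambda>s. h (s + max x 0)) - integral {0..\<delta>} (\<lambda>s. h (s + max y 0))\<bar>"
        using \<delta> by (simp add: abs_mult)
      also have "\<dots> \<le> (1/\<delta>) * ((e'/2) * \<delta>)" using I \<delta> by (intro mult_left_mono) auto
      also have "\<dots> = e'/2" using \<delta> by simp
      finally have "\<bar>hd x - hd y\<bar> \<le> e'/2" .
      then show "\<bar>hd x - hd y\<bar> < e'" using e' by linarith
    qed (use d2 in auto)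
  next
    fix x
    have "\<bar>integral {0..\<delta>} (\<lambda>s. h (s + max x 0))\<bar> \<le> B * (\<delta> - 0)"
      by (rule int_abs_le) (use \<delta> B hc_shift[OF h] in auto)
    then show "\<bar>hd x\<bar> \<le> B" unfolding hd_def using \<delta> by (simp add: abs_mult field_simps)
  next
    fix x :: real assume "x < 0" then show "hd x = hd 0" by (simp add: hd_def)
  qed
  have hd_ge: "h x - \<epsilon>/2 \<le> hd x" if "x \<ge> 0" for x
  proof -
    have "(h x - \<epsilon>/2) * (\<delta> - 0) \<le> integral {0..\<delta>} (\<lambda>s. h (s + x))"
    proof (rule int_ge_const)
      fix s assume "s \<in> {0..\<delta>}"
      then have "\<bar>(s + x) - x\<bar> < d" using \<delta> by auto
      then have "\<bar>h (s + x) - h x\<bar> < \<epsilon>/2" by (rule d(2))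
      then show "h x - \<epsilon>/2 \<le> h (s + x)" by linarith
    qed (use \<delta> hc_shift[OF h] in auto)
    then show ?thesis unfolding hd_def using \<delta> that by (simp add: field_simps)
  qed
  have c_Cub: "(\<lambda>x. h x - \<epsilon>/2) \<in> Cub" by (rule Cub_diff[OF h Cub_const])
  have "\<phi> (\<lambda>x. h x - \<epsilon>/2) \<le> \<phi> hd" by (rule im_mono[OF im c_Cub hd_Cub hd_ge])
  moreover have "\<phi> (\<lambda>x. h x - \<epsilon>/2) = \<phi> h - \<epsilon>/2" using im_diff[OF im h Cub_const] im_const[OF im] by simp
  ultimately have phd: "\<phi> h - \<epsilon>/2 \<le> \<phi> hd" by simp
  define N :: nat where "N = nat \<lceil>L0 / \<delta>\<rceil> + 1"
  define L where "L = real N * \<delta>"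
  have N: "N \<ge> 1" by (simp add: N_def)
  have L: "L \<ge> L0" "L > 0"
  proof -
    have "L0 / \<delta> \<le> real N" unfolding N_def by linarith
    then show "L \<ge> L0" unfolding L_def using \<delta> by (simp add: field_simps)
    show "L > 0" unfolding L_def using N \<delta> by simp
  qed
  define g where "g y = (\<Sum>k<N. (1 / real N) * shiftT (real k * \<delta>) hd y)" for y
  have sh_Cub: "shiftT (real k * \<delta>) hd \<in> Cub" for k by (rule Cub_shift[OF hd_Cub]) (use \<delta> in simp)
  have g_Cub: "g \<in> Cub" unfolding g_def by (rule Cub_sum) (auto intro: sh_Cub)
  have "\<phi> g = (\<Sum>k<N. (1 / real N) * \<phi> (shiftT (real k * \<delta>) hd))"
    unfolding g_def by (rule im_sum[OF im]) (auto intro: sh_Cub)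
  also have "\<dots> = (\<Sum>k<N. (1 / real N) * \<phi> hd)"
    by (rule sum.cong) (use im_shift[OF im _ hd_Cub] \<delta> in auto)
  also have "\<dots> = \<phi> hd" using N by simp
  finally have pg: "\<phi> g = \<phi> hd" .
  have "\<phi> (shiftT a g) \<le> \<phi> h - \<epsilon>"
  proof (rule im_le[OF im Cub_shift[OF g_Cub a]])
    fix y :: real assume y: "y \<ge> 0"
    define z where "z = y + a"
    have z: "z \<ge> a" "z \<ge> 0" using y a by (auto simp: z_def)
    have "shiftT a g y = (\<Sum>k<N. (1 / real N) * hd (z + real k * \<delta>))"
      unfolding shiftT_def g_def z_def using y a \<delta> by simp
    also have "\<dots> = (\<Sum>k<N. (1 / L) * integral {z + real k * \<delta> .. z + real k * \<delta> + \<delta>} h)"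
    proof (rule sum.cong)
      fix k assume "k \<in> {..<N}"
      have "max (z + real k * \<delta>) 0 = z + real k * \<delta>" using z \<delta> by simp
      then have "hd (z + real k * \<delta>) = (1/\<delta>) * integral {0..\<delta>} (\<lambda>s. h (s + (z + real k * \<delta>)))"
        by (simp add: hd_def)
      also have "integral {0..\<delta>} (\<lambda>s. h (s + (z + real k * \<delta>))) = integral {z + real k * \<delta> .. z + real k * \<delta> + \<delta>} h"
        using integral_shift_real_ivl[where f=h and a="z + real k * \<delta>" and b="z + real k * \<delta> + \<delta>" and c="z + real k * \<delta>"]
        by simp
      finally show "(1 / real N) * hd (z + real k * \<delta>) = (1 / L) * integral {z + real k * \<delta> .. z + real k * \<delta> + \<delta>} h"
        unfolding L_def by simp
    qed simp
    also have "\<dots> = (1 / L) * integral {z .. z + L} h"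
      unfolding sum_distrib_left[symmetric] using int_blocks[OF Cub_cont[OF h], where \<delta>=\<delta> and N=N and z=z] \<delta> by (simp add: L_def)
    also have "\<dots> \<le> \<phi> h - \<epsilon>"
    proof -
      have "integral {z .. z + L} h < (\<phi> h - \<epsilon>) * L" using contra L z by force
      then show ?thesis using L by (simp add: field_simps)
    qed
    finally show "shiftT a g y \<le> \<phi> h - \<epsilon>" .
  qed
  moreover have "\<phi> (shiftT a g) = \<phi> g" by (rule im_shift[OF im a g_Cub])
  ultimately show False using pg phd e by linarith
qed

lemma rising:
  fixes h :: "real \<Rightarrow> real"
  assumes h: "h \<in> Cub" and B: "\<And>x. \<bar>h x\<bar> \<le> B" and e: "\<epsilon> > 0" and L: "L > 0"
    and I: "(c + \<epsilon>) * L \<le> integral {x0..x0+L} h"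
  shows "\<exists>y\<ge>x0. \<forall>l. 0 \<le> l \<and> l \<le> \<epsilon> * L / (B + \<bar>c\<bar> + 1) \<longrightarrow> c * l \<le> integral {y..y+l} h"
proof -
  define K where "K = B + \<bar>c\<bar> + 1"
  have B0: "B \<ge> 0" using B[of 0] by linarith
  have K: "K > 0" unfolding K_def using B0 by linarith
  have hc: "continuous_on UNIV h" by (rule Cub_cont[OF h])
  define G where "G u = integral {x0..u} h - c * (u - x0)" for u
  have Gc: "continuous_on {x0..x0+L} G"
    unfolding G_def by (intro continuous_intros indefinite_integral_continuous_1 cint hc)
  obtain y where y: "y \<in> {x0..x0+L}" "\<And>u. u \<in> {x0..x0+L} \<Longrightarrow> G y \<le> G u"
    using continuous_attains_inf[OF compact_Icc _ Gc] L by auto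
  have comb: "integral {x0..y} h + integral {y..u} h = integral {x0..u} h" if "y \<le> u" for u
    by (rule Henstock_Kurzweil_Integration.integral_combine) (use y that cint[OF hc] in auto)
  have Gy: "G y \<le> 0" using y(2)[of x0] L by (simp add: G_def)
  have GL: "G (x0 + L) \<ge> \<epsilon> * L" using I by (simp add: G_def algebra_simps)
  have "integral {y..x0+L} h \<le> B * (x0 + L - y)"
    by (rule int_le_const) (use y hc B in \<open>auto simp: abs_le_iff\<close>)
  moreover have eqG: "G (x0 + L) - G y = integral {y..x0+L} h - c * (x0 + L - y)"
    using comb[of "x0 + L"] y(1) unfolding G_def by (simp add: algebra_simps)
  moreover have "- c * (x0 + L - y) \<le> \<bar>c\<bar> * (x0 + L - y)" using y(1) by (intro mult_right_mono) auto
  ultimately have "G (x0 + L) - G y \<le> (B + \<bar>c\<bar>) * (x0 + L - y)"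
    by (simp add: distrib_right)
  also have "\<dots> \<le> K * (x0 + L - y)" unfolding K_def using y(1) by (intro mult_right_mono) auto
  finally have "\<epsilon> * L \<le> K * (x0 + L - y)" using Gy GL by linarith
  then have room: "\<epsilon> * L / K \<le> x0 + L - y" using K by (simp add: field_simps)
  show ?thesis
  proof (intro exI[of _ y] conjI allI impI)
    show "y \<ge> x0" using y(1) by simp
    fix l assume l: "0 \<le> l \<and> l \<le> \<epsilon> * L / (B + \<bar>c\<bar> + 1)"
    then have "y + l \<in> {x0..x0+L}" using room y(1) unfolding K_def by auto
    then have "G y \<le> G (y + l)" by (rule y(2))
    then show "c * l \<le> integral {y..y+l} h" using comb[of "y + l"] l unfolding G_def by (simp add: algebra_simps)
  qed
qed

lemma unb_exists: "\<exists>U. unbounded_uf U"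
proof -
  obtain U :: "real filter" where U: "U \<le> at_top" "ultrafilter U" using uf_exists[of "at_top::real filter"] trivial_limit_at_top_linorder by auto
  have gt: "eventually (\<lambda>x. M < x) U" for M
    using filter_leD[OF U(1)] eventually_gt_at_top by blast
  have "unbounded_uf U"
    unfolding unbounded_uf_def
  proof (intro conjI allI impI)
    show "ultrafilter U" by fact
    show "eventually (\<lambda>x. 0 \<le> x) U" using gt[of 0] by (rule eventually_mono) simp
    fix A assume ev: "eventually (\<lambda>x. x \<in> A) U"
    show "\<not> bounded A"
    proof
      assume "bounded A"
      then obtain M where M: "\<And>x. x \<in> A \<Longrightarrow> \<bar>x\<bar> \<le> M" unfolding bounded_iff by auto
      have "eventually (\<lambda>x. False) U"
        using eventually_conj[OF ev gt[of M]] by (rule eventually_mono) (use M in fastforce)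
      then show False using uf_nonbot[OF U(2)] by simp
    qed
  qed
  then show ?thesis by blast
qed

lemma floor_ge_nat: "real m \<le> x \<Longrightarrow> m \<le> nat \<lfloor>x\<rfloor>"
  by (metis floor_mono floor_of_nat nat_mono nat_int)

lemma D2:
  assumes im: "is_T_invariant_mean \<phi>" and h: "h \<in> Cub" and e: "\<epsilon> > 0"
  shows "\<exists>\<psi>\<in>Qset. \<phi> h - \<epsilon> \<le> \<psi> h"
proof -
  obtain B where B: "\<And>x. \<bar>h x\<bar> \<le> B" using Cub_bound h by blast
  have B0: "B \<ge> 0" using B[of 0] by linarith
  define c where "c = \<phi> h - \<epsilon>"
  define K where "K = B + \<bar>c\<bar> + 1"
  have K: "K > 0" unfolding K_def using B0 by linarith
  have hc: "continuous_on UNIV h" by (rule Cub_cont[OF h])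
  have "\<exists>x. x \<ge> real m \<and> (\<forall>l. 0 \<le> l \<and> l \<le> real m \<longrightarrow> c * l \<le> integral {x..x+l} h)" for m :: nat
  proof -
    obtain L x0 where L: "L \<ge> 2 * K * real m / \<epsilon>" "x0 \<ge> real m" "L > 0"
      "(\<phi> h - \<epsilon>/2) * L \<le> integral {x0..x0+L} h"
      using D2a[OF im h _ , of "\<epsilon>/2" "real m" "2 * K * real m / \<epsilon>"] e by auto
    have "(c + \<epsilon>/2) * L \<le> integral {x0..x0+L} h" using L(4) by (simp add: c_def)
    then obtain y where y: "y \<ge> x0" "\<And>l. 0 \<le> l \<and> l \<le> (\<epsilon>/2) * L / K \<Longrightarrow> c * l \<le> integral {y..y+l} h"
      using rising[OF h B _ L(3), of "\<epsilon>/2" c x0] e unfolding K_def by auto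
    have "real m \<le> (\<epsilon>/2) * L / K"
    proof -
      have "2 * K * real m \<le> L * \<epsilon>" using L(1) e by (simp add: field_simps)
      then show ?thesis using K e by (simp add: field_simps)
    qed
    then show ?thesis using y L(2) by (intro exI[of _ y]) auto
  qed
  then obtain xs where xs: "\<And>m. xs m \<ge> real m" "\<And>m l. 0 \<le> l \<Longrightarrow> l \<le> real m \<Longrightarrow> c * l \<le> integral {xs m..xs m+l} h"
    by metis
  obtain V :: "nat filter" where V: "V \<le> sequentially" "ultrafilter V" using uf_exists[of sequentially] by auto
  have Vnb: "V \<noteq> bot" by (rule uf_nonbot[OF V(2)])
  have Vge: "eventually (\<lambda>m. N \<le> m) V" for N
    using filter_leD[OF V(1)] eventually_ge_at_top by blast
  define fr where "fr m = xs m - of_int \<lfloor>xs m\<rfloor>" for m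
  have fr: "0 \<le> fr m" "fr m < 1" for m unfolding fr_def by linarith+
  have "eventually (\<lambda>m. \<bar>fr m\<bar> \<le> 1) V"
    using fr by (intro always_eventually allI) (simp add: less_imp_le)
  then obtain \<rho> where \<rho>: "(fr \<longlongrightarrow> \<rho>) V"
    using uf_lim_exists[OF V(2)] by blast
  have ev0: "eventually (\<lambda>m. 0 \<le> fr m) V" and ev1: "eventually (\<lambda>m. fr m \<le> 1) V"
    using fr by (intro always_eventually allI, simp add: less_imp_le)+
  have \<rho>01: "0 \<le> \<rho>" "\<rho> \<le> 1"
    using tendsto_lowerbound[OF \<rho> ev0] tendsto_upperbound[OF \<rho> ev1] Vnb by auto
  define j :: nat where "j = (if \<rho> < 1 then 0 else 1)"
  define t0 where "t0 = \<rho> - real j"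
  define Nn where "Nn m = nat \<lfloor>xs m\<rfloor> + j" for m
  have t0: "0 \<le> t0" "t0 < 1" using \<rho>01 unfolding t0_def j_def by auto
  have Nn_ge: "m \<le> Nn m" for m unfolding Nn_def using floor_ge_nat[OF xs(1)[of m]] by simp
  have diff_eq: "xs m - real (Nn m) - t0 = fr m - \<rho>" for m
  proof -
    have "\<lfloor>xs m\<rfloor> \<ge> 0" using xs(1)[of m] by simp
    then have "real (nat \<lfloor>xs m\<rfloor>) = of_int \<lfloor>xs m\<rfloor>" by simp
    then show ?thesis unfolding Nn_def t0_def fr_def by simp
  qed
  have dlim: "((\<lambda>m. xs m - real (Nn m) - t0) \<longlongrightarrow> 0) V"
    unfolding diff_eq using tendsto_diff[OF \<rho> tendsto_const[of \<rho>]] by simp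
  define \<eta> where "\<eta> = filtermap Nn V"
  have \<eta>: "free_uf \<eta>"
    unfolding free_uf_def
  proof (intro conjI allI notI)
    show "ultrafilter \<eta>" unfolding \<eta>_def by (rule uf_filtermap[OF V(2)])
    fix n assume "eventually (\<lambda>m. m = n) \<eta>"
    then have "eventually (\<lambda>m. Nn m = n) V" by (simp add: \<eta>_def eventually_filtermap)
    then have "eventually (\<lambda>m. False) V"
      using Vge[of "Suc n"]
    proof (rule eventually_elim2)
      fix m assume "Nn m = n" "Suc n \<le> m"
      then show False using Nn_ge[of m] by simp
    qed
    then show False using Vnb by simp
  qed
  have \<omega>: "(\<eta>, t0) \<in> Omega_star" unfolding Omega_star_def using \<eta> t0 by auto
  define hw where "hw = f_omega h (\<eta>, t0)"
  have hw_c: "continuous_on UNIV hw" unfolding hw_def by (rule fo_cont[OF \<eta> h])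
  have lim1: "((\<lambda>m. h (real (Nn m) + t0 + s)) \<longlongrightarrow> hw s) V" for s
    using fo_tendsto[OF \<eta> h, of t0 s] unfolding \<eta>_def hw_def filterlim_filtermap .
  have lim2: "((\<lambda>m. h (xs m + s)) \<longlongrightarrow> hw s) V" for s
  proof -
    have "((\<lambda>m. h (xs m + s) - h (real (Nn m) + t0 + s)) \<longlongrightarrow> 0) V"
    proof (rule tendstoI)
      fix e :: real assume e: "e > 0"
      obtain d where d: "d > 0" "\<And>x y. \<bar>x - y\<bar> < d \<Longrightarrow> \<bar>h x - h y\<bar> < e" using Cub_uc[OF h e] by blast
      show "eventually (\<lambda>m. dist (h (xs m + s) - h (real (Nn m) + t0 + s)) 0 < e) V"
        using tendstoD[OF dlim d(1)]
      proof (rule eventually_mono)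
        fix m assume "dist (xs m - real (Nn m) - t0) 0 < d"
        then have "\<bar>(xs m + s) - (real (Nn m) + t0 + s)\<bar> < d" by (simp add: dist_real_def algebra_simps)
        then show "dist (h (xs m + s) - h (real (Nn m) + t0 + s)) 0 < e" using d(2) by (simp add: dist_real_def)
      qed
    qed
    from tendsto_add[OF this lim1[of s]] show ?thesis by simp
  qed
  have lower: "c * l \<le> integral {0..l} hw" if l: "l > 0" for l
  proof (rule field_le_epsilon)
    fix e :: real assume e: "e > 0"
    define e1 where "e1 = e / (3 * l + 1)"
    have e1: "e1 > 0" "3 * e1 * l \<le> e"
    proof -
      show "e1 > 0" unfolding e1_def using e l by simp
      have "3 * l \<le> 3 * l + 1" by simp
      then have "3 * l * e \<le> (3 * l + 1) * e" using e by (intro mult_right_mono) auto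
      then show "3 * e1 * l \<le> e" unfolding e1_def using l by (simp add: field_simps)
    qed
    obtain d where d: "d > 0" "\<And>x y. \<bar>x - y\<bar> < d \<Longrightarrow> \<bar>h x - h y\<bar> < e1" using Cub_uc[OF h e1(1)] by blast
    define J where "J = nat \<lceil>2 * l / d\<rceil>"
    define G where "G = (\<lambda>j. real j * (d/2)) ` {..J}"
    have "eventually (\<lambda>m. \<forall>g\<in>G. dist (h (xs m + g)) (hw g) < e1) V"
      unfolding G_def by (intro eventually_ball_finite) (auto intro: tendstoD[OF lim2 e1(1)])
    moreover have "eventually (\<lambda>m. nat \<lceil>l\<rceil> \<le> m) V" by (rule Vge)
    ultimately obtain m where m: "\<forall>g\<in>G. dist (h (xs m + g)) (hw g) < e1" "nat \<lceil>l\<rceil> \<le> m"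
      using eventually_happens'[OF Vnb eventually_conj] by blast
    have ml: "l \<le> real m" using m(2) by (rule nat_ceil_le)
    have close: "\<bar>hw s - h (s + xs m)\<bar> \<le> 3 * e1" if s: "s \<in> {0..l}" for s
    proof -
      define jj where "jj = nat \<lfloor>s / (d/2)\<rfloor>"
      define g where "g = real jj * (d/2)"
      have sd: "s / (d/2) \<ge> 0" using s d by auto
      have "real jj \<le> s / (d/2)" "s / (d/2) < real jj + 1" unfolding jj_def using sd by linarith+
      then have g1: "g \<le> s" "s < g + d/2" unfolding g_def using d by (auto simp: field_simps)
      have "s / (d/2) \<le> 2 * l / d" using s d by (auto simp: field_simps)
      then have "jj \<le> J" unfolding jj_def J_def by (intro nat_mono) linarith
      then have gG: "g \<in> G" unfolding G_def g_def by auto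
      have a1: "\<bar>h (xs m + s) - h (xs m + g)\<bar> < e1" using g1 d by (intro d(2)) auto
      have a2: "\<bar>h (xs m + g) - hw g\<bar> < e1" using m(1) gG by (auto simp: dist_real_def)
      have a3: "\<bar>hw g - hw s\<bar> \<le> e1"
        unfolding hw_def by (rule fo_uc[OF \<eta> h d(2)]) (use g1 d in auto)
      have eq: "s + xs m = xs m + s" by simp
      show ?thesis unfolding eq abs_le_iff using a1 a2 a3 unfolding abs_less_iff abs_le_iff by linarith
    qed
    have "integral {0..l} (\<lambda>s. hw s - h (s + xs m)) \<ge> (- (3 * e1)) * (l - 0)"
    proof (rule int_ge_const)
      fix s assume "s \<in> {0..l}"
      from close[OF this] show "- (3 * e1) \<le> hw s - h (s + xs m)" by (simp add: abs_le_iff)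
    qed (use l hw_c hc_shift[OF h] in \<open>auto intro!: continuous_intros\<close>)
    moreover have "integral {0..l} (\<lambda>s. hw s - h (s + xs m)) = integral {0..l} hw - integral {0..l} (\<lambda>s. h (s + xs m))"
      by (rule integral_diff) (use cint hw_c hc_shift[OF h] in auto)
    moreover have "integral {0..l} (\<lambda>s. h (s + xs m)) = integral {xs m..xs m + l} h"
      using integral_shift_real_ivl[where f=h and a="xs m" and b="xs m + l" and c="xs m"] by simp
    moreover have "c * l \<le> integral {xs m..xs m + l} h" using xs(2)[of l m] l ml by simp
    ultimately show "c * l \<le> integral {0..l} hw + e" using e1(2) by (simp add: algebra_simps)
  qed
  obtain U where U: "unbounded_uf U" using unb_exists by blast
  have "c \<le> phiQ U (\<eta>, t0) h"
  proof (rule tendsto_lowerbound[OF phiQ_tendsto[OF \<eta> U h]])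
    show "eventually (\<lambda>x. c \<le> avg h (\<eta>, t0) x) U"
      using unb_ev_gt[OF U, of 0]
    proof (rule eventually_mono)
      fix x :: real assume x: "0 < x"
      have "c * x \<le> integral {0..x} hw" by (rule lower[OF x])
      then show "c \<le> avg h (\<eta>, t0) x" unfolding avg_def hw_def[symmetric] using x by (simp add: field_simps)
    qed
  qed (use uf_nonbot[OF unb_uf[OF U]] in auto)
  moreover have "phiQ U (\<eta>, t0) \<in> Qset" unfolding Qset_def using \<omega> U by blast
  ultimately show ?thesis unfolding c_def by blast
qed

lemma sum_split_add: fixes n m :: nat shows "(\<Sum>i<n+m. F i) = (\<Sum>i<n. F i) + (\<Sum>i<m. F (n + i))"
  by (induction m) (simp_all add: algebra_simps)

lemma conv_comb:
  assumes "w \<in> conv_hull_fun S" "u \<in> conv_hull_fun S" "0 \<le> t" "t \<le> 1"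
  shows "(\<lambda>g. (1 - t) * w g + t * u g) \<in> conv_hull_fun S"
proof -
  obtain n :: nat and a \<phi> where w: "w = (\<lambda>f. \<Sum>i<n. a i * \<phi> i f)" "\<forall>i<n. 0 \<le> a i \<and> \<phi> i \<in> S" "(\<Sum>i<n. a i) = 1"
    using assms(1) unfolding conv_hull_fun_def mem_Collect_eq by (elim exE conjE) auto
  obtain m :: nat and b \<psi> where u: "u = (\<lambda>f. \<Sum>i<m. b i * \<psi> i f)" "\<forall>i<m. 0 \<le> b i \<and> \<psi> i \<in> S" "(\<Sum>i<m. b i) = 1"
    using assms(2) unfolding conv_hull_fun_def mem_Collect_eq by (elim exE conjE) auto
  define a' where "a' i = (if i < n then (1 - t) * a i else t * b (i - n))" for i
  define \<phi>' where "\<phi>' i = (if i < n then \<phi> i else \<psi> (i - n))" for i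
  have s1: "(\<Sum>i<n+m. a' i * \<phi>' i f) = (1 - t) * w f + t * u f" for f
  proof -
    have "(\<Sum>i<n+m. a' i * \<phi>' i f) = (\<Sum>i<n. a' i * \<phi>' i f) + (\<Sum>i<m. a' (n + i) * \<phi>' (n + i) f)"
      by (rule sum_split_add)
    also have "(\<Sum>i<n. a' i * \<phi>' i f) = (\<Sum>i<n. (1 - t) * (a i * \<phi> i f))"
      by (rule sum.cong) (auto simp: a'_def \<phi>'_def)
    also have "(\<Sum>i<m. a' (n + i) * \<phi>' (n + i) f) = (\<Sum>i<m. t * (b i * \<psi> i f))"
      by (rule sum.cong) (auto simp: a'_def \<phi>'_def)
    finally show ?thesis unfolding w(1) u(1) by (simp add: sum_distrib_left)
  qed
  have s2: "(\<Sum>i<n+m. a' i) = 1"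
  proof -
    have "(\<Sum>i<n+m. a' i) = (\<Sum>i<n. a' i) + (\<Sum>i<m. a' (n + i))" by (rule sum_split_add)
    also have "(\<Sum>i<n. a' i) = (\<Sum>i<n. (1 - t) * a i)" by (rule sum.cong) (auto simp: a'_def)
    also have "(\<Sum>i<m. a' (n + i)) = (\<Sum>i<m. t * b i)" by (rule sum.cong) (auto simp: a'_def)
    finally show ?thesis using w(3) u(3) by (simp add: sum_distrib_left[symmetric])
  qed
  have s3: "\<forall>i<n+m. 0 \<le> a' i \<and> \<phi>' i \<in> S"
    using w(2) u(2) assms(3,4) unfolding a'_def \<phi>'_def by auto
  have "(\<lambda>g. (1 - t) * w g + t * u g) = (\<lambda>f. \<Sum>i<n+m. a' i * \<phi>' i f)" using s1 by simp
  then show ?thesis unfolding conv_hull_fun_def mem_Collect_eq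
    by (intro exI[of _ "n+m"] exI[of _ a'] exI[of _ \<phi>'] conjI s2 s3)
qed

lemma conv_base: assumes "\<psi> \<in> S" shows "\<psi> \<in> conv_hull_fun S"
proof -
  have "\<psi> = (\<lambda>f. \<Sum>i<(1::nat). (\<lambda>_. 1::real) i * (\<lambda>_. \<psi>) i f)" by simp
  moreover have "(\<forall>i<(1::nat). 0 \<le> (\<lambda>_. 1::real) i \<and> (\<lambda>_. \<psi>) i \<in> S) \<and> (\<Sum>i<(1::nat). (\<lambda>_. 1::real) i) = 1"
    using assms by simp
  ultimately show ?thesis unfolding conv_hull_fun_def mem_Collect_eq
    by (intro exI[of _ "1::nat"] exI[of _ "\<lambda>_. 1::real"] exI[of _ "\<lambda>_. \<psi>"] conjI) auto
qed

lemma nbhd: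
  fixes \<phi> :: "(real \<Rightarrow> real) \<Rightarrow> real"
  assumes "\<phi> \<notin> closure A"
  shows "\<exists>F \<epsilon>. finite F \<and> \<epsilon> > 0 \<and> (\<forall>\<psi>\<in>A. \<exists>f\<in>F. \<epsilon> \<le> \<bar>\<psi> f - \<phi> f\<bar>)"
proof -
  define Op where "Op = - closure A"
  have O: "open Op" "\<phi> \<in> Op" "Op \<inter> A = {}" using assms closure_subset unfolding Op_def by auto
  have "openin (product_topology (\<lambda>i. euclidean) UNIV) Op" using O(1) unfolding open_fun_def .
  from product_topology_open_contains_basis[OF this O(2)]
  obtain X where X: "\<phi> \<in> Pi\<^sub>E UNIV X" "\<And>i. openin euclidean (X i)" "finite {i. X i \<noteq> topspace euclidean}"
    "Pi\<^sub>E UNIV X \<subseteq> Op" by blast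
  define F where "F = {i. X i \<noteq> UNIV}"
  have F: "finite F" using X(3) unfolding F_def by simp
  have "\<forall>f\<in>F. \<exists>e>0. ball (\<phi> f) e \<subseteq> X f"
  proof
    fix f assume "f \<in> F"
    have "open (X f)" using X(2)[of f] by simp
    moreover have "\<phi> f \<in> X f" using X(1) by auto
    ultimately show "\<exists>e>0. ball (\<phi> f) e \<subseteq> X f" using open_contains_ball by blast
  qed
  from bchoice[OF this] obtain e where e': "\<forall>f\<in>F. e f > 0 \<and> ball (\<phi> f) (e f) \<subseteq> X f" by blast
  then have e: "\<And>f. f \<in> F \<Longrightarrow> e f > 0 \<and> ball (\<phi> f) (e f) \<subseteq> X f" by blast
  define \<epsilon> where "\<epsilon> = (if F = {} then 1 else Min (e ` F))"
  have \<epsilon>: "\<epsilon> > 0" "\<And>f. f \<in> F \<Longrightarrow> \<epsilon> \<le> e f"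
    using e F unfolding \<epsilon>_def by auto
  have "\<forall>\<psi>\<in>A. \<exists>f\<in>F. \<epsilon> \<le> \<bar>\<psi> f - \<phi> f\<bar>"
  proof (rule ballI, rule ccontr)
    fix \<psi> assume \<psi>: "\<psi> \<in> A" and n: "\<not> (\<exists>f\<in>F. \<epsilon> \<le> \<bar>\<psi> f - \<phi> f\<bar>)"
    have "\<psi> i \<in> X i" for i
    proof (cases "i \<in> F")
      case True
      then have "\<not> \<epsilon> \<le> \<bar>\<psi> i - \<phi> i\<bar>" using n by blast
      then have "\<bar>\<psi> i - \<phi> i\<bar> < e i" using \<epsilon>(2)[OF True] by linarith
      then have "\<psi> i \<in> ball (\<phi> i) (e i)" by (simp add: dist_real_def abs_minus_commute)
      then show ?thesis using e[OF True] by blast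
    next
      case False then show ?thesis unfolding F_def by auto
    qed
    then have "\<psi> \<in> Pi\<^sub>E UNIV X" by (simp add: PiE_UNIV_domain)
    then show False using X(4) O(3) \<psi> by blast
  qed
  then show ?thesis using F \<epsilon>(1) by blast
qed

theorem theorem2p2:
  shows "{\<phi>. is_T_invariant_mean \<phi>} = closure (conv_hull_fun Qset)"
proof
  show "closure (conv_hull_fun Qset) \<subseteq> {\<phi>. is_T_invariant_mean \<phi>}" by (rule closure_sub)
next
  show "{\<phi>. is_T_invariant_mean \<phi>} \<subseteq> closure (conv_hull_fun Qset)"
  proof
    fix \<phi> assume "\<phi> \<in> {\<phi>. is_T_invariant_mean \<phi>}"
    then have im: "is_T_invariant_mean \<phi>" by simp
    define C where "C = conv_hull_fun Qset"
    have Cim: "is_T_invariant_mean \<psi>" if "\<psi> \<in> C" for \<psi>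
      by (rule conv_im[where S=Qset, OF Qset_im that[unfolded C_def]])
    show "\<phi> \<in> closure (conv_hull_fun Qset)"
    proof (rule ccontr)
      assume "\<phi> \<notin> closure (conv_hull_fun Qset)"
      then obtain F \<epsilon> where F: "finite F" and \<epsilon>: "\<epsilon> > 0"
        and sep: "\<forall>\<psi>\<in>C. \<exists>f\<in>F. \<epsilon> \<le> \<bar>\<psi> f - \<phi> f\<bar>"
        using nbhd unfolding C_def by blast
      define F' where "F' = F \<inter> Cub"
      have F': "finite F'" using F unfolding F'_def by simp
      have "\<forall>f\<in>F'. \<exists>B. (\<forall>x. \<bar>f x\<bar> \<le> B) \<and> B \<ge> 0"
      proof
        fix f assume "f \<in> F'" then have "f \<in> Cub" unfolding F'_def by simp
        show "\<exists>B. (\<forall>x. \<bar>f x\<bar> \<le> B) \<and> B \<ge> 0"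
        proof (rule Cub_bound[OF \<open>f \<in> Cub\<close>])
          fix B assume "\<And>x. \<bar>f x\<bar> \<le> B" "B \<ge> 0"
          then show "\<exists>B. (\<forall>x. \<bar>f x\<bar> \<le> B) \<and> B \<ge> 0" by blast
        qed
      qed
      from bchoice[OF this] obtain Bf where Bf: "\<forall>f\<in>F'. (\<forall>x. \<bar>f x\<bar> \<le> Bf f) \<and> Bf f \<ge> 0" by blast
      have bnd: "\<bar>\<psi> f\<bar> \<le> Bf f" if "is_T_invariant_mean \<psi>" "f \<in> F'" for \<psi> f
        by (rule im_abs[OF that(1)]) (use Bf that(2) in blast)
      define S where "S \<psi> = (\<Sum>f\<in>F'. (\<phi> f - \<psi> f)^2)" for \<psi> :: "(real \<Rightarrow> real) \<Rightarrow> real"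
      define R where "R = (\<Sum>f\<in>F'. (2 * Bf f)^2)"
      have Qle: "(\<Sum>f\<in>F'. (u f - w f)^2) \<le> R" if "is_T_invariant_mean u" "is_T_invariant_mean w" for u w
        unfolding R_def
      proof (rule sum_mono)
        fix f assume f: "f \<in> F'"
        have "\<bar>u f - w f\<bar> \<le> 2 * Bf f" using bnd[OF that(1) f] bnd[OF that(2) f] by linarith
        then have "\<bar>u f - w f\<bar>^2 \<le> (2 * Bf f)^2" by (intro power_mono) auto
        then show "(u f - w f)^2 \<le> (2 * Bf f)^2" by simp
      qed
      have Sge: "\<epsilon>^2 \<le> S \<psi>" if "\<psi> \<in> C" for \<psi>
      proof -
        have "\<exists>f\<in>F. \<epsilon> \<le> \<bar>\<psi> f - \<phi> f\<bar>" by (rule bspec[OF sep that])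
        then obtain f where f: "f \<in> F" "\<epsilon> \<le> \<bar>\<psi> f - \<phi> f\<bar>" by (elim bexE)
        have "f \<in> Cub"
        proof (rule ccontr)
          assume "f \<notin> Cub"
          then have "\<psi> f = 0" "\<phi> f = 0" using im_out[OF Cim[OF that]] im_out[OF im] by auto
          then show False using f(2) \<epsilon> by simp
        qed
        then have fF: "f \<in> F'" using f(1) unfolding F'_def by simp
        have "\<epsilon>^2 \<le> \<bar>\<psi> f - \<phi> f\<bar>^2" by (rule power_mono[OF f(2)]) (use \<epsilon> in simp)
        also have "\<dots> = (\<phi> f - \<psi> f)^2" by (simp only: power2_abs) (rule power2_commute)
        also have "\<dots> \<le> S \<psi>" unfolding S_def
          by (rule member_le_sum[where f="\<lambda>g. (\<phi> g - \<psi> g)^2", OF fF _ F']) simp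
        finally show ?thesis .
      qed
      obtain \<psi>0 where \<psi>0: "\<psi>0 \<in> Qset" using D2[OF im Cub_const[of 1], of 1] by auto
      have \<psi>0C: "\<psi>0 \<in> C" unfolding C_def by (rule conv_base[OF \<psi>0])
      have CR: "S \<psi> \<le> R" if "\<psi> \<in> C" for \<psi> unfolding S_def by (rule Qle[OF im Cim[OF that]])
      have eR: "\<epsilon>^2 \<le> R" using Sge[OF \<psi>0C] CR[OF \<psi>0C] by linarith
      have R0: "R \<ge> 0" unfolding R_def by (intro sum_nonneg) simp
      define D where "D = Inf (S ` C)"
      have bdd: "bdd_below (S ` C)" unfolding bdd_below_def S_def by (rule exI[of _ 0]) (auto intro: sum_nonneg)
      have Cne: "S ` C \<noteq> {}" using \<psi>0C by auto
      have D: "\<epsilon>^2 \<le> D" unfolding D_def by (rule cInf_greatest[OF Cne]) (use Sge in auto)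
      have Dle: "D \<le> S \<psi>" if "\<psi> \<in> C" for \<psi> unfolding D_def by (rule cInf_lower) (use that bdd in auto)
      define t where "t = \<epsilon>^2 / (2 * R + 2)"
      have t: "t > 0" "t \<le> 1" "t * R \<le> \<epsilon>^2 / 2"
      proof -
        show "t > 0" unfolding t_def using \<epsilon> R0 by simp
        show "t \<le> 1" unfolding t_def using eR R0 by (simp add: field_simps)
        have "\<epsilon>^2 * (R * 2) \<le> \<epsilon>^2 * (2 * R + 2)" by (rule mult_left_mono) auto
        then show "t * R \<le> \<epsilon>^2 / 2" unfolding t_def using R0 by (simp add: field_simps)
      qed
      define \<delta> where "\<delta> = t * \<epsilon>^2 / 2"
      have \<delta>: "\<delta> > 0" unfolding \<delta>_def using t \<epsilon> by simp
      have "Inf (S ` C) < D + \<delta>" using \<delta> unfolding D_def by simp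
      then obtain w where wC: "w \<in> C" and wS: "S w < D + \<delta>" using cInf_lessD[OF Cne] by blast
      define c where "c f = \<phi> f - w f" for f
      define h where "h x = (\<Sum>f\<in>F'. c f * f x)" for x
      have hC: "h \<in> Cub" unfolding h_def by (rule Cub_sum[OF F']) (auto simp: F'_def)
      have imsum: "\<xi> h = (\<Sum>f\<in>F'. c f * \<xi> f)" if "is_T_invariant_mean \<xi>" for \<xi>
        unfolding h_def using im_sum[OF that F', of "\<lambda>f. f" c] by (simp add: F'_def)
      have key: "\<epsilon>^2 / 2 < \<phi> h - u h" if uC: "u \<in> C" for u
      proof -
        define v where "v g = (1 - t) * w g + t * u g" for g
        have vC: "v \<in> C" unfolding v_def C_def
          by (rule conv_comb[OF wC[unfolded C_def] uC[unfolded C_def]]) (use t in auto)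
        define P where "P = (\<Sum>f\<in>F'. c f * (u f - w f))"
        define Q where "Q = (\<Sum>f\<in>F'. (u f - w f)^2)"
        have "S v = (\<Sum>f\<in>F'. (c f)^2 - 2 * t * (c f * (u f - w f)) + t^2 * (u f - w f)^2)"
          unfolding S_def by (rule sum.cong) (simp_all add: v_def c_def power2_eq_square algebra_simps)
        also have "\<dots> = S w - 2 * t * P + t^2 * Q"
          unfolding S_def P_def Q_def c_def
          by (simp add: sum.distrib sum_subtractf sum_distrib_left)
        finally have Sv: "S v = S w - 2 * t * P + t^2 * Q" .
        have QR: "Q \<le> R" unfolding Q_def by (rule Qle[OF Cim[OF uC] Cim[OF wC]])
        have "t^2 * Q \<le> t^2 * R" using QR by (intro mult_left_mono) auto
        moreover have "D \<le> S v" by (rule Dle[OF vC])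
        ultimately have "2 * t * P < \<delta> + t^2 * R" using Sv wS by linarith
        then have "2 * t * P < 2 * t * (\<epsilon>^2 / 4 + t * R / 2)"
          unfolding \<delta>_def by (simp add: power2_eq_square algebra_simps)
        then have "P < \<epsilon>^2 / 4 + t * R / 2" using t(1) by simp
        then have P: "P < \<epsilon>^2 / 2" using t(3) by linarith
        have "\<phi> h - u h = (\<Sum>f\<in>F'. c f * \<phi> f) - (\<Sum>f\<in>F'. c f * u f)"
          using imsum[OF im] imsum[OF Cim[OF uC]] by simp
        also have "\<dots> = (\<Sum>f\<in>F'. c f * (\<phi> f - w f)) - P"
          unfolding P_def by (simp add: sum_subtractf[symmetric] algebra_simps)
        also have "(\<Sum>f\<in>F'. c f * (\<phi> f - w f)) = S w"
          unfolding S_def c_def by (simp add: power2_eq_square)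
        finally have "\<phi> h - u h = S w - P" .
        moreover have "\<epsilon>^2 \<le> S w" by (rule Sge[OF wC])
        ultimately show ?thesis using P by linarith
      qed
      obtain \<psi> where \<psi>: "\<psi> \<in> Qset" "\<phi> h - \<epsilon>^2 / 2 \<le> \<psi> h"
        using D2[OF im hC, of "\<epsilon>^2 / 2"] \<epsilon> by auto
      have "\<psi> \<in> C" unfolding C_def by (rule conv_base[OF \<psi>(1)])
      from key[OF this] \<psi>(2) show False by linarith
    qed
  qed
qed

end
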